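(* Let $H_A$ and $H_B$ be finite-dimensional Hilbert spaces and let $|\phi\rangle,|\psi\rangle\in H_A\otimes H_B$ be unit vectors such that $\langle\phi|\psi\rangle$ is a real positive number. Let $s,t>0$ with $s+t=1$, $s\le t$ and $\sqrt{s/t}\ge\langle\phi|\psi\rangle$. Then there exist a finite-dimensional auxiliary Hilbert space $H_S$ (held by Alice) with a unit vector $|0\rangle_S$ and an orthonormal set $\{|i\rangle_S\}_{i=1}^N$, a unitary $U^{AS}$ on $H_S\otimes H_A$, an integer $0\le m\le N$, nonnegative reals $s_i,t_i$, unit vectors $|\phi_i\rangle,|\psi_i\rangle\in H_A\otimes H_B$ for $i\le m$, and unit vectors $|i\rangle\in H_A$ and $|\eta_i\rangle,|\gamma_i\rangle\in H_B$ for $i>m$, such that $$U^{AS}|0\rangle_S|\phi\rangle=\sum_{i=1}^m\sqrt{s_i}\,|i\rangle_S|\phi_i\rangle+\sum_{i=m+1}^N\sqrt{s_i}\,|i\rangle_S|i\rangle|\eta_i\rangle,$$ $$U^{AS}|0\rangle_S|\psi\rangle=\sum_{i=1}^m\sqrt{t_i}\,|i\rangle_S|\psi_i\rangle+\sum_{i=m+1}^N\sqrt{t_i}\,|i\rangle_S|i\rangle|\gamma_i\rangle,$$ where $\langle\phi_i|\psi_i\rangle=0$ for $i\le m$, and for $i>m$ the number $\langle\eta_i|\gamma_i\rangle$ is real and $1\ge\sqrt{s s_i/(t t_i)}\ge\langle\eta_i|\gamma_i\rangle\ge0$.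
   Context: Here $s$ and $t$ are the prior probabilities with which the states $|\phi\rangle$ and $|\psi\rangle$ are prepared. The unitary $U^{AS}$ acts only on Alice's system $A$ together with the auxiliary system $S$, tensored with the identity on Bob's system $B$. The paper adopts throughout the normalization (by a global phase on $|\psi\rangle$) that $\langle\phi|\psi\rangle>0$, and the lemma is used under the case assumption $\sqrt{s/t}\ge\langle\phi|\psi\rangle$. *)

theory Defs
  imports Complex_Main
begin

text \<open>Finite-dimensional Hilbert spaces are modelled concretely:
  H_A = functions 'a \<Rightarrow> complex and H_B = functions 'b \<Rightarrow> complex for finite
  basis-index types 'a, 'b; H_A \<otimes> H_B = functions 'a \<times> 'b \<Rightarrow> complex.
  The auxiliary space H_S (existentially chosen) is C^dS, i.e. functions
  nat \<Rightarrow> complex restricted to indices < dS; H_S \<otimes> H_A \<otimes> H_B is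
  nat \<times> 'a \<times> 'b \<Rightarrow> complex restricted to first index < dS.\<close>

definition ip :: "('x::finite \<Rightarrow> complex) \<Rightarrow> ('x \<Rightarrow> complex) \<Rightarrow> complex" where
  "ip v w = (\<Sum>x\<in>UNIV. cnj (v x) * w x)"

definition ipS :: "nat \<Rightarrow> (nat \<Rightarrow> complex) \<Rightarrow> (nat \<Rightarrow> complex) \<Rightarrow> complex" where
  "ipS n v w = (\<Sum>k<n. cnj (v k) * w k)"

definition idxSA :: "nat \<Rightarrow> (nat \<times> 'a::finite) set" where
  "idxSA dS = {..<dS} \<times> (UNIV :: 'a set)"

definition unitary_SA :: "nat \<Rightarrow> (nat \<times> 'a::finite \<Rightarrow> nat \<times> 'a \<Rightarrow> complex) \<Rightarrow> bool" where
  "unitary_SA dS U \<longleftrightarrow>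
     (\<forall>x\<in>idxSA dS. \<forall>y\<in>idxSA dS.
        (\<Sum>z\<in>idxSA dS. cnj (U z x) * U z y) = (if x = y then 1 else 0))"

text \<open>Action of U \<otimes> 1_B on a state in H_S \<otimes> H_A \<otimes> H_B.\<close>
definition apply_SA :: "nat \<Rightarrow> (nat \<times> 'a::finite \<Rightarrow> nat \<times> 'a \<Rightarrow> complex)
     \<Rightarrow> (nat \<times> 'a \<times> 'b \<Rightarrow> complex) \<Rightarrow> (nat \<times> 'a \<times> 'b \<Rightarrow> complex)" where
  "apply_SA dS U \<Psi> = (\<lambda>(k, a, b). \<Sum>p\<in>idxSA dS. U (k, a) p * \<Psi> (fst p, snd p, b))"

end

theory Submission
  imports Defs
begin


definition bf :: "('a::finite \<Rightarrow> 'a \<Rightarrow> complex) \<Rightarrow> ('a \<Rightarrow> complex) \<Rightarrow> ('a \<Rightarrow> complex) \<Rightarrow> complex" where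
  "bf M x y = (\<Sum>a\<in>UNIV. \<Sum>a'\<in>UNIV. cnj (x a) * M a a' * y a')"

definition qf :: "('a::finite \<Rightarrow> 'a \<Rightarrow> complex) \<Rightarrow> ('a \<Rightarrow> complex) \<Rightarrow> complex" where
  "qf M x = bf M x x"

definition herm :: "('a::finite \<Rightarrow> 'a \<Rightarrow> complex) \<Rightarrow> bool" where
  "herm M \<longleftrightarrow> (\<forall>a a'. M a' a = cnj (M a a'))"

definition col :: "('a \<Rightarrow> 'a \<Rightarrow> complex) \<Rightarrow> 'a \<Rightarrow> 'a \<Rightarrow> complex" where
  "col X j = (\<lambda>a. X a j)"

definition ucols :: "('a::finite \<Rightarrow> 'a \<Rightarrow> complex) \<Rightarrow> bool" where
  "ucols X \<longleftrightarrow> (\<forall>j j'. ip (col X j) (col X j') = (if j = j' then 1 else 0))"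

definition urows :: "('a::finite \<Rightarrow> 'a \<Rightarrow> complex) \<Rightarrow> bool" where
  "urows X \<longleftrightarrow> (\<forall>a a'. (\<Sum>j\<in>UNIV. X a j * cnj (X a' j)) = (if a = a' then 1 else 0))"

lemma bf_add_left: "bf M (\<lambda>a. x a + y a) z = bf M x z + bf M y z"
  unfolding bf_def by (simp add: algebra_simps sum.distrib)

lemma bf_add_right: "bf M z (\<lambda>a. x a + y a) = bf M z x + bf M z y"
  unfolding bf_def by (simp add: algebra_simps sum.distrib)

lemma bf_scal_left: "bf M (\<lambda>a. c * x a) z = cnj c * bf M x z"
  unfolding bf_def by (simp add: algebra_simps sum_distrib_left)

lemma bf_scal_right: "bf M z (\<lambda>a. c * x a) = c * bf M z x"
  unfolding bf_def by (simp add: algebra_simps sum_distrib_left)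

lemma bf_lin2:
  "bf M (\<lambda>a. \<alpha> * x a + \<beta> * y a) (\<lambda>a. \<alpha> * x a + \<beta> * y a) =
     cnj \<alpha> * \<alpha> * bf M x x + cnj \<beta> * \<beta> * bf M y y + cnj \<alpha> * \<beta> * bf M x y + cnj \<beta> * \<alpha> * bf M y x"
  by (simp add: bf_add_left bf_add_right bf_scal_left bf_scal_right algebra_simps)

lemma herm_bf: "herm M \<Longrightarrow> bf M y x = cnj (bf M x y)"
proof -
  assume h: "herm M"
  have "bf M y x = (\<Sum>a'\<in>UNIV. \<Sum>a\<in>UNIV. cnj (y a) * M a a' * x a')"
    unfolding bf_def by (rule sum.swap)
  also have "\<dots> = (\<Sum>a'\<in>UNIV. \<Sum>a\<in>UNIV. x a' * cnj (M a' a) * cnj (y a))"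
  proof (intro sum.cong refl)
    fix a a' show "cnj (y a) * M a a' * x a' = x a' * cnj (M a' a) * cnj (y a)"
      using h unfolding herm_def by (metis mult.commute mult.left_commute)
  qed
  also have "\<dots> = cnj (bf M x y)"
    unfolding bf_def by (simp add: cnj_sum)
  finally show ?thesis .
qed

lemma herm_qf_real: "herm M \<Longrightarrow> qf M x = complex_of_real (Re (qf M x))"
proof -
  assume h: "herm M"
  have "cnj (qf M x) = qf M x" using herm_bf[OF h, of x x] unfolding qf_def by simp
  then have "Im (qf M x) = 0" by (metis add.inverse_neutral add_diff_cancel_left' cnj.sel(2) diff_0 neg_equal_zero)
  then show ?thesis by (simp add: complex_eq_iff)
qed

lemma ip_add_left: "ip (\<lambda>a. x a + y a) z = ip x z + ip y z"
  unfolding ip_def by (simp add: algebra_simps sum.distrib)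
lemma ip_add_right: "ip z (\<lambda>a. x a + y a) = ip z x + ip z y"
  unfolding ip_def by (simp add: algebra_simps sum.distrib)
lemma ip_scal_left: "ip (\<lambda>a. c * x a) z = cnj c * ip x z"
  unfolding ip_def by (simp add: algebra_simps sum_distrib_left)
lemma ip_scal_right: "ip z (\<lambda>a. c * x a) = c * ip z x"
  unfolding ip_def by (simp add: algebra_simps sum_distrib_left)
lemma ip_cnj: "ip y x = cnj (ip x y)"
  unfolding ip_def by (simp add: mult.commute)

lemma sum_swap3: "(\<Sum>j\<in>A. \<Sum>a\<in>B. \<Sum>a'\<in>C. f j a a') = (\<Sum>a\<in>B. \<Sum>a'\<in>C. \<Sum>j\<in>A. f j a a')"
proof -
  have "(\<Sum>j\<in>A. \<Sum>a\<in>B. \<Sum>a'\<in>C. f j a a') = (\<Sum>a\<in>B. \<Sum>j\<in>A. \<Sum>a'\<in>C. f j a a')"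
    by (rule sum.swap)
  also have "\<dots> = (\<Sum>a\<in>B. \<Sum>a'\<in>C. \<Sum>j\<in>A. f j a a')"
    by (rule sum.cong[OF refl], rule sum.swap)
  finally show ?thesis .
qed

lemma trace_inv:
  assumes "urows X"
  shows "(\<Sum>j\<in>UNIV. qf F (col X j)) = (\<Sum>a\<in>UNIV. F a a)"
proof -
  have "(\<Sum>j\<in>UNIV. qf F (col X j)) = (\<Sum>j\<in>UNIV. \<Sum>a\<in>UNIV. \<Sum>a'\<in>UNIV. F a a' * (X a' j * cnj (X a j)))"
    unfolding qf_def bf_def col_def by (simp add: algebra_simps)
  also have "\<dots> = (\<Sum>a\<in>UNIV. \<Sum>a'\<in>UNIV. \<Sum>j\<in>UNIV. F a a' * (X a' j * cnj (X a j)))"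
    by (rule sum_swap3)
  also have "\<dots> = (\<Sum>a\<in>UNIV. \<Sum>a'\<in>UNIV. F a a' * (if a' = a then 1 else 0))"
    using assms unfolding urows_def by (simp add: sum_distrib_left[symmetric])
  also have "\<dots> = (\<Sum>a\<in>UNIV. F a a)"
    by (simp add: if_distrib cong: if_cong)
  finally show ?thesis .
qed


definition givens :: "('a \<Rightarrow> 'a \<Rightarrow> complex) \<Rightarrow> 'a \<Rightarrow> 'a \<Rightarrow> real \<Rightarrow> complex \<Rightarrow> 'a \<Rightarrow> 'a \<Rightarrow> complex" where
  "givens X p l \<theta> z = (\<lambda>a j. if j = p then complex_of_real (cos \<theta>) * X a p + z * complex_of_real (sin \<theta>) * X a l
     else if j = l then - complex_of_real (sin \<theta>) * X a p + z * complex_of_real (cos \<theta>) * X a l else X a j)"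

lemma col_givens_p: "col (givens X p l \<theta> z) p = (\<lambda>a. complex_of_real (cos \<theta>) * col X p a + (z * complex_of_real (sin \<theta>)) * col X l a)"
  unfolding givens_def col_def by simp

lemma col_givens_l: "p \<noteq> l \<Longrightarrow> col (givens X p l \<theta> z) l = (\<lambda>a. (- complex_of_real (sin \<theta>)) * col X p a + (z * complex_of_real (cos \<theta>)) * col X l a)"
  unfolding givens_def col_def by simp

lemma col_givens_o: "j \<noteq> p \<Longrightarrow> j \<noteq> l \<Longrightarrow> col (givens X p l \<theta> z) j = col X j"
  unfolding givens_def col_def by simp

lemma cs_complex: "complex_of_real (cos \<theta>) * complex_of_real (cos \<theta>) + complex_of_real (sin \<theta>) * complex_of_real (sin \<theta>) = 1"
proof -
  have "cos \<theta> * cos \<theta> + sin \<theta> * sin \<theta> = 1" using sin_cos_squared_add[of \<theta>] by (simp add: power2_eq_square)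
  then show ?thesis by (metis of_real_1 of_real_add of_real_mult)
qed

lemma ip_comb_left: "ip (\<lambda>a. \<alpha> * x a + \<beta> * y a) w = cnj \<alpha> * ip x w + cnj \<beta> * ip y w"
  unfolding ip_def by (simp add: algebra_simps sum.distrib sum_distrib_left)
lemma ip_comb_right: "ip w (\<lambda>a. \<alpha> * x a + \<beta> * y a) = \<alpha> * ip w x + \<beta> * ip w y"
  unfolding ip_def by (simp add: algebra_simps sum.distrib sum_distrib_left)
lemma ip_comb: "ip (\<lambda>a. \<alpha> * x a + \<beta> * y a) (\<lambda>a. \<gamma> * x a + \<delta> * y a) =
   cnj \<alpha> * \<gamma> * ip x x + cnj \<alpha> * \<delta> * ip x y + cnj \<beta> * \<gamma> * ip y x + cnj \<beta> * \<delta> * ip y y"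
  unfolding ip_comb_left ip_comb_right by (simp add: algebra_simps)

lemma ucols_givens:
  assumes u: "ucols X" and pl: "p \<noteq> l" and z: "cnj z * z = 1"
  shows "ucols (givens X p l \<theta> z)"
proof -
  have o: "\<And>i i'. ip (col X i) (col X i') = (if i = i' then 1 else 0)" using u unfolding ucols_def by blast
  let ?c = "complex_of_real (cos \<theta>)" and ?s = "complex_of_real (sin \<theta>)"
  let ?G = "givens X p l \<theta> z"
  have cs: "?c * ?c + ?s * ?s = 1" by (rule cs_complex)
  have zz: "\<And>w. z * (cnj z * w) = w" "\<And>w. cnj z * (z * w) = w" using z by (metis mult.assoc mult.commute mult_1)+
  have e1: "ip (col ?G p) (col ?G p) = 1"
    unfolding col_givens_p ip_comb using pl cs z by (simp add: o algebra_simps zz)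
  have e2: "ip (col ?G p) (col ?G l) = 0"
    unfolding col_givens_p col_givens_l[OF pl] ip_comb using pl cs z by (simp add: o algebra_simps zz)
  have e3: "ip (col ?G l) (col ?G p) = 0"
    unfolding col_givens_p col_givens_l[OF pl] ip_comb using pl cs z by (simp add: o algebra_simps zz)
  have e4: "ip (col ?G l) (col ?G l) = 1"
    unfolding col_givens_l[OF pl] ip_comb using pl cs z by (simp add: o algebra_simps zz)
  have e5: "\<And>j. j \<noteq> p \<Longrightarrow> j \<noteq> l \<Longrightarrow> ip (col ?G p) (col X j) = 0 \<and> ip (col X j) (col ?G p) = 0 \<and>
       ip (col ?G l) (col X j) = 0 \<and> ip (col X j) (col ?G l) = 0"
    unfolding col_givens_p col_givens_l[OF pl] ip_comb_left ip_comb_right by (simp add: o)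
  show ?thesis
    unfolding ucols_def
  proof (intro allI)
    fix j j'
    show "ip (col ?G j) (col ?G j') = (if j = j' then 1 else 0)"
      apply (cases "j = p"; cases "j = l"; cases "j' = p"; cases "j' = l")
      using e1 e2 e3 e4 e5[of j] e5[of j'] pl
      by (simp_all add: col_givens_o o)
  qed
qed

lemma sum_split2:
  fixes f :: "'a::finite \<Rightarrow> 'b::comm_monoid_add"
  assumes "p \<noteq> l"
  shows "(\<Sum>j\<in>UNIV. f j) = f p + f l + (\<Sum>j\<in>UNIV-{p,l}. f j)"
proof -
  have "(\<Sum>j\<in>UNIV. f j) = f p + (\<Sum>j\<in>UNIV-{p}. f j)" by (simp add: sum.remove)
  also have "(\<Sum>j\<in>UNIV-{p}. f j) = f l + (\<Sum>j\<in>UNIV-{p}-{l}. f j)"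
    using assms by (intro sum.remove) auto
  also have "UNIV-{p}-{l} = UNIV - {p,l}" by auto
  finally show ?thesis by (simp add: add.assoc)
qed

lemma urows_givens:
  assumes u: "urows X" and pl: "p \<noteq> l" and z: "cnj z * z = 1"
  shows "urows (givens X p l \<theta> z)"
  unfolding urows_def
proof (intro allI)
  fix a a'
  let ?c = "complex_of_real (cos \<theta>)" and ?s = "complex_of_real (sin \<theta>)"
  let ?G = "givens X p l \<theta> z"
  have cs: "?c * ?c + ?s * ?s = 1" by (rule cs_complex)
  have zz: "\<And>w. z * (cnj z * w) = w" "\<And>w. cnj z * (z * w) = w" using z by (metis mult.assoc mult.commute mult_1)+
  have pair: "?G a p * cnj (?G a' p) + ?G a l * cnj (?G a' l) = X a p * cnj (X a' p) + X a l * cnj (X a' l)"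
  proof -
    have "?G a p * cnj (?G a' p) + ?G a l * cnj (?G a' l) =
      (?c * ?c + ?s * ?s) * (X a p * cnj (X a' p)) + (z * cnj z) * (?c * ?c + ?s * ?s) * (X a l * cnj (X a' l))"
      unfolding givens_def using pl by (simp add: algebra_simps)
    then show ?thesis using cs z by (simp add: mult.commute)
  qed
  have rest: "(\<Sum>j\<in>UNIV-{p,l}. ?G a j * cnj (?G a' j)) = (\<Sum>j\<in>UNIV-{p,l}. X a j * cnj (X a' j))"
    by (rule sum.cong) (auto simp: givens_def)
  show "(\<Sum>j\<in>UNIV. ?G a j * cnj (?G a' j)) = (if a = a' then 1 else 0)"
    using sum_split2[OF pl, of "\<lambda>j. ?G a j * cnj (?G a' j)"] sum_split2[OF pl, of "\<lambda>j. X a j * cnj (X a' j)"]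
      pair rest u unfolding urows_def by simp
qed

lemma qf_givens_p:
  assumes z: "cnj z * z = 1"
  shows "qf M (col (givens X p l \<theta> z) p) =
    complex_of_real (cos \<theta>) * complex_of_real (cos \<theta>) * qf M (col X p) +
    complex_of_real (sin \<theta>) * complex_of_real (sin \<theta>) * qf M (col X l) +
    complex_of_real (cos \<theta>) * complex_of_real (sin \<theta>) * (z * bf M (col X p) (col X l) + cnj z * bf M (col X l) (col X p))"
proof -
  have zz: "\<And>w. z * (cnj z * w) = w" "\<And>w. cnj z * (z * w) = w" using z by (metis mult.assoc mult.commute mult_1)+
  show ?thesis unfolding qf_def col_givens_p bf_lin2 by (simp add: algebra_simps zz)
qed

lemma qf_givens_l:
  assumes z: "cnj z * z = 1" and pl: "p \<noteq> l"
  shows "qf M (col (givens X p l \<theta> z) l) =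
    complex_of_real (sin \<theta>) * complex_of_real (sin \<theta>) * qf M (col X p) +
    complex_of_real (cos \<theta>) * complex_of_real (cos \<theta>) * qf M (col X l) -
    complex_of_real (cos \<theta>) * complex_of_real (sin \<theta>) * (z * bf M (col X p) (col X l) + cnj z * bf M (col X l) (col X p))"
proof -
  have zz: "\<And>w. z * (cnj z * w) = w" "\<And>w. cnj z * (z * w) = w" using z by (metis mult.assoc mult.commute mult_1)+
  show ?thesis unfolding qf_def col_givens_l[OF pl] bf_lin2 by (simp add: algebra_simps zz)
qed

lemma pos_neg_exists:
  fixes f :: "'a::finite \<Rightarrow> real"
  assumes s: "(\<Sum>j\<in>UNIV. f j) = 0" and nz: "f j0 \<noteq> 0"
  shows "\<exists>p l. f p > 0 \<and> f l < 0"
proof -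
  have "\<exists>p. f p > 0"
  proof (rule ccontr)
    assume "\<not> (\<exists>p. f p > 0)"
    then have "\<forall>x\<in>UNIV. 0 \<le> - f x" by (auto simp: not_less)
    moreover have "(\<Sum>j\<in>UNIV. - f j) = 0" using s by (simp add: sum_negf)
    ultimately have "\<forall>x\<in>UNIV. - f x = 0" using sum_nonneg_eq_0_iff[of UNIV "\<lambda>x. - f x"] by simp
    then show False using nz by simp
  qed
  moreover have "\<exists>l. f l < 0"
  proof (rule ccontr)
    assume "\<not> (\<exists>l. f l < 0)"
    then have "\<forall>x\<in>UNIV. 0 \<le> f x" by (auto simp: not_less)
    then have "\<forall>x\<in>UNIV. f x = 0" using sum_nonneg_eq_0_iff[of UNIV f] s by simp
    then show False using nz by simp
  qed
  ultimately show ?thesis by blast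
qed

lemma phase_choice:
  fixes \<beta> :: complex
  shows "\<exists>z. cnj z * z = 1 \<and> z * \<beta> + cnj z * cnj \<beta> = 0"
proof (cases "\<beta> = 0")
  case True then show ?thesis by (intro exI[of _ 1]) simp
next
  case False
  define z where "z = \<i> * cnj \<beta> / complex_of_real (cmod \<beta>)"
  have nb: "cmod \<beta> \<noteq> 0" using False by simp
  have bb: "cnj \<beta> * \<beta> = complex_of_real (cmod \<beta> * cmod \<beta>)"
    using complex_norm_square[of \<beta>] by (simp add: power2_eq_square mult.commute)
  have "cnj z * z = (cnj \<beta> * \<beta>) / complex_of_real (cmod \<beta> * cmod \<beta>)"
    unfolding z_def by (simp add: field_simps)
  then have 1: "cnj z * z = 1" using bb nb by simp
  have "z * \<beta> + cnj z * cnj \<beta> = (\<i> * (cnj \<beta> * \<beta>) - \<i> * (cnj \<beta> * \<beta>)) / complex_of_real (cmod \<beta>)"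
    unfolding z_def by (simp add: field_simps)
  then have 2: "z * \<beta> + cnj z * cnj \<beta> = 0" by simp
  show ?thesis using 1 2 by blast
qed

lemma equalize:
  fixes F G :: "'a::finite \<Rightarrow> 'a \<Rightarrow> complex"
  assumes hF: "herm F" and hG: "herm G" and trF: "(\<Sum>a\<in>UNIV. F a a) = 0"
  shows "ucols X \<Longrightarrow> urows X \<Longrightarrow> (\<forall>j. qf G (col X j) = 0) \<Longrightarrow>
    \<exists>X'. ucols X' \<and> urows X' \<and> (\<forall>j. qf G (col X' j) = 0) \<and> (\<forall>j. qf F (col X' j) = 0)"
proof (induction "card {j. qf F (col X j) \<noteq> 0}" arbitrary: X rule: less_induct)
  case less
  show ?case
  proof (cases "\<forall>j. qf F (col X j) = 0")
    case True then show ?thesis using less.prems by blast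
  next
    case False
    then obtain j0 where j0: "qf F (col X j0) \<noteq> 0" by blast
    define r where "r j = Re (qf F (col X j))" for j
    have rF: "\<And>j. qf F (col X j) = complex_of_real (r j)" using herm_qf_real[OF hF] r_def by simp
    have "(\<Sum>j\<in>UNIV. qf F (col X j)) = 0" using trace_inv[OF less.prems(2)] trF by simp
    then have "complex_of_real (\<Sum>j\<in>UNIV. r j) = 0" by (simp add: rF of_real_sum)
    then have sr: "(\<Sum>j\<in>UNIV. r j) = 0" by (simp only: of_real_eq_0_iff)
    have "r j0 \<noteq> 0" using j0 rF by auto
    then obtain p l where rp: "r p > 0" and rl: "r l < 0" using pos_neg_exists[OF sr] by blast
    then have pl: "p \<noteq> l" by auto
    define \<beta> where "\<beta> = bf G (col X p) (col X l)"
    obtain z where z1: "cnj z * z = 1" and zb: "z * \<beta> + cnj z * cnj \<beta> = 0" using phase_choice by blast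
    define \<gamma> where "\<gamma> = Re (z * bf F (col X p) (col X l))"
    define g where "g \<theta> = cos \<theta> * cos \<theta> * r p + sin \<theta> * sin \<theta> * r l + 2 * cos \<theta> * sin \<theta> * \<gamma>" for \<theta>
    have cont: "continuous_on {0..pi/2} g" unfolding g_def by (intro continuous_intros)
    have g0: "g 0 = r p" and g1: "g (pi/2) = r l" unfolding g_def by simp_all
    obtain \<theta> where g\<theta>: "g \<theta> = 0"
      using IVT2'[where f=g and a=0 and b="pi/2" and y=0] cont g0 g1 rp rl by auto
    let ?X = "givens X p l \<theta> z"
    have bFl: "bf F (col X l) (col X p) = cnj (bf F (col X p) (col X l))" by (rule herm_bf[OF hF])
    have bGl: "bf G (col X l) (col X p) = cnj \<beta>" unfolding \<beta>_def by (rule herm_bf[OF hG])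
    have re2: "z * bf F (col X p) (col X l) + cnj z * cnj (bf F (col X p) (col X l)) = complex_of_real (2 * \<gamma>)"
      unfolding \<gamma>_def using complex_add_cnj[of "z * bf F (col X p) (col X l)"] by simp
    have qFp: "qf F (col ?X p) = 0"
    proof -
      have "qf F (col ?X p) = complex_of_real (g \<theta>)"
        unfolding qf_givens_p[OF z1] bFl re2 rF g_def by simp
      then show ?thesis using g\<theta> by simp
    qed
    have Gz: "\<And>j. qf G (col X j) = 0" using less.prems(3) by blast
    have qG: "\<forall>j. qf G (col ?X j) = 0"
    proof
      fix j
      show "qf G (col ?X j) = 0"
      proof (cases "j = p")
        case True then show ?thesis unfolding True qf_givens_p[OF z1] bGl using Gz zb \<beta>_def by simp
      next
        case False
        show ?thesis
        proof (cases "j = l")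
          case True then show ?thesis unfolding True qf_givens_l[OF z1 pl] bGl using Gz zb \<beta>_def by simp
        next
          case False then show ?thesis using \<open>j \<noteq> p\<close> Gz by (simp add: col_givens_o)
        qed
      qed
    qed
    have sub: "{j. qf F (col ?X j) \<noteq> 0} \<subseteq> {j. qf F (col X j) \<noteq> 0} - {p}"
    proof
      fix j assume "j \<in> {j. qf F (col ?X j) \<noteq> 0}"
      then have j: "qf F (col ?X j) \<noteq> 0" by simp
      then have "j \<noteq> p" using qFp by auto
      moreover have "qf F (col X j) \<noteq> 0"
      proof (cases "j = l")
        case True then show ?thesis using rl rF by auto
      next
        case False then show ?thesis using j \<open>j \<noteq> p\<close> by (simp add: col_givens_o)
      qed
      ultimately show "j \<in> {j. qf F (col X j) \<noteq> 0} - {p}" by simp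
    qed
    have pin: "p \<in> {j. qf F (col X j) \<noteq> 0}" using rp rF by auto
    have "card {j. qf F (col ?X j) \<noteq> 0} < card {j. qf F (col X j) \<noteq> 0}"
      by (rule le_less_trans[OF card_mono[OF _ sub] card_Diff1_less[OF _ pin]]) simp_all
    from less.hyps[OF this ucols_givens[OF less.prems(1) pl z1] urows_givens[OF less.prems(2) pl z1] qG]
    show ?thesis .
  qed
qed

lemma qf_add_mat: "qf (\<lambda>a a'. A a a' + B a a') x = qf A x + qf B x"
  unfolding qf_def bf_def by (simp add: algebra_simps sum.distrib)

lemma qf_scal_mat: "qf (\<lambda>a a'. c * A a a') x = c * qf A x"
  unfolding qf_def bf_def by (simp add: algebra_simps sum_distrib_left)

lemma qf_zero_mat: "qf (\<lambda>a a'. 0) x = 0"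
  unfolding qf_def bf_def by simp

lemma walgate:
  fixes M :: "'a::finite \<Rightarrow> 'a \<Rightarrow> complex"
  assumes tr: "(\<Sum>a\<in>UNIV. M a a) = 0"
  shows "\<exists>X. ucols X \<and> urows X \<and> (\<forall>j. qf M (col X j) = 0)"
proof -
  define H where "H a a' = (M a a' + cnj (M a' a)) / 2" for a a'
  define J where "J a a' = (M a a' - cnj (M a' a)) / (2 * \<i>)" for a a'
  have hH: "herm H" unfolding herm_def H_def by (simp add: add.commute)
  have hJ: "herm J" unfolding herm_def J_def by (simp add: field_simps)
  have h0: "herm (\<lambda>a a'. 0::complex)" unfolding herm_def by simp
  have trc: "(\<Sum>a\<in>UNIV. cnj (M a a)) = 0" using tr by (metis cnj_sum complex_cnj_zero)
  have trH: "(\<Sum>a\<in>UNIV. H a a) = 0" unfolding H_def using tr trc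
    by (simp add: sum.distrib sum_divide_distrib[symmetric])
  have "(\<Sum>a\<in>UNIV. J a a) = (\<Sum>a\<in>UNIV. (M a a - cnj (M a a)) / (2 * \<i>))" by (simp only: J_def)
  also have "\<dots> = ((\<Sum>a\<in>UNIV. M a a) - (\<Sum>a\<in>UNIV. cnj (M a a))) / (2 * \<i>)"
    by (simp only: sum_divide_distrib[symmetric] sum_subtractf)
  finally have trJ: "(\<Sum>a\<in>UNIV. J a a) = 0" using tr trc by simp
  have MHJ: "M = (\<lambda>a a'. H a a' + \<i> * J a a')" unfolding H_def J_def by (auto simp: field_simps)
  define I0 where "I0 = (\<lambda>a j::'a. if a = j then (1::complex) else 0)"
  have e: "\<And>j j'. (\<Sum>a\<in>UNIV. cnj (I0 a j) * I0 a j') = (\<Sum>a\<in>UNIV. if a = j then (if j = j' then 1 else 0) else 0)"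
    by (rule sum.cong) (auto simp: I0_def)
  have uc0: "ucols I0" unfolding ucols_def ip_def col_def using e by simp
  have e2: "\<And>j j'. (\<Sum>a\<in>UNIV. I0 j a * cnj (I0 j' a)) = (\<Sum>a\<in>UNIV. if a = j then (if j = j' then 1 else 0) else 0)"
    by (rule sum.cong) (auto simp: I0_def)
  have ur0: "urows I0" unfolding urows_def using e2 by simp
  obtain X1 where X1: "ucols X1" "urows X1" "\<forall>j. qf J (col X1 j) = 0"
    using equalize[OF hJ h0 trJ uc0 ur0] qf_zero_mat by auto
  obtain X2 where X2: "ucols X2" "urows X2" "\<forall>j. qf J (col X2 j) = 0" "\<forall>j. qf H (col X2 j) = 0"
    using equalize[OF hH hJ trH X1] by auto
  have "\<forall>j. qf M (col X2 j) = 0"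
    using X2(3,4) by (simp add: MHJ qf_add_mat qf_scal_mat)
  then show ?thesis using X2 by blast
qed



definition pcon :: "('a::finite \<Rightarrow> complex) \<Rightarrow> ('a \<times> 'b \<Rightarrow> complex) \<Rightarrow> 'b \<Rightarrow> complex" where
  "pcon x f = (\<lambda>b. \<Sum>a\<in>UNIV. cnj (x a) * f (a, b))"

definition crossM :: "('a::finite \<times> 'b::finite \<Rightarrow> complex) \<Rightarrow> ('a \<times> 'b \<Rightarrow> complex) \<Rightarrow> 'a \<Rightarrow> 'a \<Rightarrow> complex" where
  "crossM f g = (\<lambda>a1 a2. \<Sum>b\<in>UNIV. cnj (f (a2, b)) * g (a1, b))"

lemma ip_pair: "ip (f :: 'a::finite \<times> 'b::finite \<Rightarrow> complex) g = (\<Sum>a\<in>UNIV. \<Sum>b\<in>UNIV. cnj (f (a, b)) * g (a, b))"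
  unfolding ip_def by (simp add: UNIV_Times_UNIV[symmetric] sum.cartesian_product del: UNIV_Times_UNIV)

lemma ip_pcon: "ip (pcon x f) (pcon x g) = qf (crossM f g) (x :: 'a::finite \<Rightarrow> complex)"
proof -
  have "ip (pcon x f) (pcon x g) = (\<Sum>b\<in>UNIV. \<Sum>a'\<in>UNIV. \<Sum>a\<in>UNIV. cnj (x a') * (cnj (f (a, b)) * g (a', b)) * x a)"
    unfolding ip_def pcon_def by (simp add: cnj_sum sum_distrib_left sum_distrib_right algebra_simps)
  also have "\<dots> = (\<Sum>a'\<in>UNIV. \<Sum>a\<in>UNIV. \<Sum>b\<in>UNIV. cnj (x a') * (cnj (f (a, b)) * g (a', b)) * x a)"
    by (rule sum_swap3)
  also have "\<dots> = qf (crossM f g) x"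
    unfolding qf_def bf_def crossM_def by (simp add: sum_distrib_left sum_distrib_right)
  finally show ?thesis .
qed

lemma trace_crossM: "(\<Sum>a\<in>UNIV. crossM f g a a) = ip f g"
  unfolding crossM_def ip_pair by simp

lemma sum_ip_pcon:
  assumes "urows X"
  shows "(\<Sum>j\<in>UNIV. ip (pcon (col X j) f) (pcon (col X j) g)) = ip f g"
  unfolding ip_pcon trace_inv[OF assms] trace_crossM ..

lemma pcon_lin: "pcon x (\<lambda>p. \<alpha> * f p + \<beta> * g p) = (\<lambda>b. \<alpha> * pcon x f b + \<beta> * pcon x g b)"
  unfolding pcon_def by (simp add: sum.distrib sum_distrib_left algebra_simps)

lemma ip_self_real: "ip f f = complex_of_real (\<Sum>x\<in>UNIV. (cmod (f x))\<^sup>2)"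
  unfolding ip_def of_real_sum by (intro sum.cong refl) (subst complex_norm_square, simp add: mult.commute)

lemma ip_self_nonneg: "Re (ip f f) \<ge> 0"
  unfolding ip_self_real by (simp add: sum_nonneg)

lemma ip_self_eq: "ip f f = complex_of_real (Re (ip f f))"
  unfolding ip_self_real by simp

lemma ip_self_zero: "Re (ip f f) = 0 \<Longrightarrow> f = (\<lambda>x. 0)"
proof -
  assume "Re (ip f f) = 0"
  then have "(\<Sum>x\<in>UNIV. (cmod (f x))\<^sup>2) = 0" unfolding ip_self_real by simp
  then have "\<forall>x\<in>UNIV. (cmod (f x))\<^sup>2 = 0" by (subst sum_nonneg_eq_0_iff[symmetric]) auto
  then show ?thesis by auto
qed

lemma branch_good:
  fixes A B :: "'b::finite \<Rightarrow> complex" and lam aa bb :: real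
  assumes AB: "ip A B = 0" and lam: "lam > 0" and aa: "aa \<le> 0" and bl: "bb - lam * aa = 1"
    and bsq: "bb * bb \<ge> lam * lam * (aa * aa)"
  defines "u \<equiv> \<lambda>b. A b + complex_of_real aa * B b" and "v \<equiv> \<lambda>b. complex_of_real lam * A b + complex_of_real bb * B b"
  shows "ip u v = complex_of_real (lam * Re (ip A A) + aa * bb * Re (ip B B))"
    and "ip u u = complex_of_real (Re (ip A A) + aa * aa * Re (ip B B))"
    and "ip v v = complex_of_real (lam * lam * Re (ip A A) + bb * bb * Re (ip B B))"
    and "Re (ip u v) \<le> lam * Re (ip u u)"
    and "lam * lam * Re (ip u u) \<le> Re (ip v v)"
    and "Re (ip u v) > 0 \<Longrightarrow> Re (ip u u) > 0 \<and> Re (ip v v) > 0"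
proof -
  have BA: "ip B A = 0" using AB ip_cnj[of B A] by simp
  have AA: "ip A A = complex_of_real (Re (ip A A))" by (rule ip_self_eq)
  have BB: "ip B B = complex_of_real (Re (ip B B))" by (rule ip_self_eq)
  have nA: "Re (ip A A) \<ge> 0" and nB: "Re (ip B B) \<ge> 0" by (rule ip_self_nonneg)+
  show uv: "ip u v = complex_of_real (lam * Re (ip A A) + aa * bb * Re (ip B B))"
    unfolding u_def v_def by (simp add: ip_add_left ip_add_right ip_scal_left ip_scal_right AB BA, subst AA, subst BB, simp)
  show uu: "ip u u = complex_of_real (Re (ip A A) + aa * aa * Re (ip B B))"
    unfolding u_def by (simp add: ip_add_left ip_add_right ip_scal_left ip_scal_right AB BA, subst AA, subst BB, simp)
  show vv: "ip v v = complex_of_real (lam * lam * Re (ip A A) + bb * bb * Re (ip B B))"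
    unfolding v_def by (simp add: ip_add_left ip_add_right ip_scal_left ip_scal_right AB BA, subst AA, subst BB, simp)
  have bb': "bb = 1 + lam * aa" using bl by simp
  have "lam * (Re (ip A A) + aa * aa * Re (ip B B)) - (lam * Re (ip A A) + aa * bb * Re (ip B B)) = - aa * Re (ip B B)"
    unfolding bb' by (simp add: algebra_simps)
  moreover have "- aa * Re (ip B B) \<ge> 0" using aa nB by (simp add: mult_nonpos_nonneg)
  ultimately show "Re (ip u v) \<le> lam * Re (ip u u)" unfolding uv uu by simp
  have "(lam * lam * Re (ip A A) + bb * bb * Re (ip B B)) - lam * lam * (Re (ip A A) + aa * aa * Re (ip B B)) = (bb * bb - lam * lam * (aa * aa)) * Re (ip B B)"
    by (simp add: algebra_simps)
  moreover have "(bb * bb - lam * lam * (aa * aa)) * Re (ip B B) \<ge> 0" using bsq nB by simp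
  ultimately show "lam * lam * Re (ip u u) \<le> Re (ip v v)" unfolding uu vv by simp
  assume pos: "Re (ip u v) > 0"
  have "aa * bb \<le> 0"
  proof -
    have "bb \<ge> 0"
    proof (rule ccontr)
      assume "\<not> bb \<ge> 0"
      then have "bb < 0" by simp
      then have "bb * bb > 0" by (simp add: mult_neg_neg)
      have "bb + lam * aa < 0" using \<open>bb < 0\<close> aa lam by (smt (verit) mult_nonneg_nonpos)
      moreover have "bb - lam * aa = 1" by (rule bl)
      moreover have "(bb - lam * aa) * (bb + lam * aa) \<ge> 0" using bsq by (simp add: algebra_simps)
      ultimately show False by simp
    qed
    then show ?thesis using aa by (simp add: mult_nonpos_nonneg)
  qed
  then have "aa * bb * Re (ip B B) \<le> 0" using nB by (simp add: mult_nonpos_nonneg)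
  then have "lam * Re (ip A A) > 0" using pos uv by simp
  then have A0: "Re (ip A A) > 0" using lam by (simp add: zero_less_mult_iff)
  have "Re (ip u u) \<ge> Re (ip A A)" unfolding uu using nB by simp
  moreover have "Re (ip v v) \<ge> lam * lam * Re (ip A A)" unfolding vv using nB by simp
  moreover have "lam * lam * Re (ip A A) > 0" using A0 lam by simp
  ultimately show "Re (ip u u) > 0 \<and> Re (ip v v) > 0" using A0 by linarith
qed

lemma normalize_vec:
  fixes m :: "'c::finite \<Rightarrow> complex"
  assumes pos: "Re (ip m m) > 0"
  defines "x \<equiv> \<lambda>i. m i / complex_of_real (sqrt (Re (ip m m)))"
  shows "ip x x = 1" and "m = (\<lambda>i. complex_of_real (sqrt (Re (ip m m))) * x i)"
    and "\<And>y. ip x y = ip m y / complex_of_real (sqrt (Re (ip m m)))"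
    and "\<And>y. ip y x = ip y m / complex_of_real (sqrt (Re (ip m m)))"
proof -
  let ?r = "sqrt (Re (ip m m))"
  have r0: "?r > 0" using pos by simp
  have x': "x = (\<lambda>i. complex_of_real (inverse ?r) * m i)" unfolding x_def by (simp add: divide_inverse mult.commute)
  show "\<And>y. ip x y = ip m y / complex_of_real ?r"
    unfolding x' ip_scal_left by (simp add: divide_inverse mult.commute)
  show "\<And>y. ip y x = ip y m / complex_of_real ?r"
    unfolding x' ip_scal_right by (simp add: divide_inverse mult.commute)
  have "ip x x = complex_of_real (inverse ?r * inverse ?r) * ip m m"
    unfolding x' ip_scal_left ip_scal_right by simp
  also have "\<dots> = complex_of_real (inverse ?r * inverse ?r * Re (ip m m))"
    by (subst ip_self_eq, simp)
  also have "inverse ?r * inverse ?r * Re (ip m m) = 1"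
    using pos by (simp add: field_simps)
  finally show "ip x x = 1" by simp
  show "m = (\<lambda>i. complex_of_real ?r * x i)"
    unfolding x_def using r0 by (auto simp: field_simps)
qed

lemma orth_unit:
  fixes y :: "'c::finite \<Rightarrow> complex"
  assumes d: "(i1::'c) \<noteq> i2"
  shows "\<exists>x. ip x x = 1 \<and> ip x y = 0"
proof (cases "y i1 = 0 \<and> y i2 = 0")
  case True
  define x where "x = (\<lambda>i. if i = i1 then (1::complex) else 0)"
  have "ip x x = (\<Sum>i\<in>UNIV. if i = i1 then 1 else 0)" unfolding ip_def x_def by (rule sum.cong) auto
  then have "ip x x = 1" by simp
  moreover have "ip x y = (\<Sum>i\<in>UNIV. if i = i1 then y i1 else 0)" unfolding ip_def x_def by (rule sum.cong) auto
  then have "ip x y = 0" using True by simp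
  ultimately show ?thesis by blast
next
  case False
  define x0 where "x0 = (\<lambda>i. if i = i1 then cnj (y i2) else if i = i2 then - cnj (y i1) else 0)"
  have "ip x0 y = cnj (x0 i1) * y i1 + cnj (x0 i2) * y i2 + (\<Sum>i\<in>UNIV-{i1,i2}. cnj (x0 i) * y i)"
    unfolding ip_def by (rule sum_split2[OF d])
  also have "\<dots> = 0" unfolding x0_def using d by (simp add: mult.commute)
  finally have o: "ip x0 y = 0" .
  have "ip x0 x0 = cnj (x0 i1) * x0 i1 + cnj (x0 i2) * x0 i2 + (\<Sum>i\<in>UNIV-{i1,i2}. cnj (x0 i) * x0 i)"
    unfolding ip_def by (rule sum_split2[OF d])
  also have "\<dots> = y i2 * cnj (y i2) + y i1 * cnj (y i1)" unfolding x0_def using d by simp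
  also have "\<dots> = complex_of_real ((cmod (y i2))\<^sup>2 + (cmod (y i1))\<^sup>2)"
    unfolding of_real_add complex_norm_square ..
  finally have "Re (ip x0 x0) = (cmod (y i2))\<^sup>2 + (cmod (y i1))\<^sup>2" by simp
  moreover have "(cmod (y i2))\<^sup>2 + (cmod (y i1))\<^sup>2 > 0" using False
    by (cases "y i1 = 0") (auto intro: add_pos_nonneg add_nonneg_pos)
  ultimately have pos: "Re (ip x0 x0) > 0" by simp
  show ?thesis using normalize_vec(1)[OF pos] normalize_vec(3)[OF pos, of y] o by (intro exI[of _ "\<lambda>i. x0 i / complex_of_real (sqrt (Re (ip x0 x0)))"]) simp
qed

lemma norm_pair:
  fixes m1 m2 :: "'c::finite \<Rightarrow> complex"
  assumes d: "(i1::'c) \<noteq> i2" and o: "ip m1 m2 = 0"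
  shows "\<exists>x y. ip x x = 1 \<and> ip y y = 1 \<and> ip x y = 0 \<and>
     m1 = (\<lambda>i. complex_of_real (sqrt (Re (ip m1 m1))) * x i) \<and>
     m2 = (\<lambda>i. complex_of_real (sqrt (Re (ip m2 m2))) * y i)"
proof -
  have n1: "Re (ip m1 m1) \<ge> 0" and n2: "Re (ip m2 m2) \<ge> 0" by (rule ip_self_nonneg)+
  show ?thesis
  proof (cases "Re (ip m1 m1) > 0")
    case p1: True
    define x where "x = (\<lambda>i. m1 i / complex_of_real (sqrt (Re (ip m1 m1))))"
    note X = normalize_vec[OF p1, folded x_def]
    show ?thesis
    proof (cases "Re (ip m2 m2) > 0")
      case p2: True
      define y where "y = (\<lambda>i. m2 i / complex_of_real (sqrt (Re (ip m2 m2))))"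
      note Y = normalize_vec[OF p2, folded y_def]
      have xy: "ip x y = 0" using X(3)[of y] Y(4)[of m1] o by simp
      show ?thesis
        apply (rule exI[of _ x], rule exI[of _ y])
        using X(1) Y(1) xy unfolding x_def y_def using X(2) Y(2) by (intro conjI) (assumption+)
    next
      case False
      then have "Re (ip m2 m2) = 0" using n2 by simp
      then have z2: "m2 = (\<lambda>i. 0)" by (rule ip_self_zero)
      obtain y where y: "ip y y = 1" "ip y x = 0" using orth_unit[OF d] by blast
      have xy: "ip x y = 0" using y(2) ip_cnj[of x y] by simp
      have m2: "m2 = (\<lambda>i. complex_of_real (sqrt (Re (ip m2 m2))) * y i)" using z2 by (simp add: ip_def)
      show ?thesis
        apply (rule exI[of _ x], rule exI[of _ y])
        using X(1) y(1) xy m2 unfolding x_def using X(2) by (intro conjI) (assumption+)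
    qed
  next
    case False
    then have "Re (ip m1 m1) = 0" using n1 by simp
    then have z1: "m1 = (\<lambda>i. 0)" by (rule ip_self_zero)
    obtain y where y1: "ip y y = 1" and y2: "m2 = (\<lambda>i. complex_of_real (sqrt (Re (ip m2 m2))) * y i)"
    proof (cases "Re (ip m2 m2) > 0")
      case True show ?thesis by (rule that[OF normalize_vec(1,2)[OF True]])
    next
      case False
      then have "Re (ip m2 m2) = 0" using n2 by simp
      then have z2: "m2 = (\<lambda>i. 0)" by (rule ip_self_zero)
      obtain y :: "'c \<Rightarrow> complex" where "ip y y = 1" "ip y (\<lambda>i. 0) = 0" using orth_unit[OF d, of "\<lambda>i. 0"] by blast
      then show ?thesis using that z2 by (simp add: ip_def)
    qed
    obtain x where x: "ip x x = 1" "ip x y = 0" using orth_unit[OF d] by blast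
    have m1: "m1 = (\<lambda>i. complex_of_real (sqrt (Re (ip m1 m1))) * x i)" using z1 by (simp add: ip_def)
    show ?thesis
      apply (rule exI[of _ x], rule exI[of _ y])
      using x(1) y1 x(2) m1 y2 by (intro conjI) (assumption+)
  qed
qed

definition rot :: "nat \<Rightarrow> real \<Rightarrow> real \<Rightarrow> nat \<Rightarrow> nat \<Rightarrow> complex" where
  "rot \<kappa> cc ss k k' = (if k' = 0 then (if k = 0 then complex_of_real cc else if k = \<kappa> then complex_of_real ss else 0)
     else if k' = \<kappa> then (if k = 0 then - complex_of_real ss else if k = \<kappa> then complex_of_real cc else 0)
     else if k = k' then 1 else 0)"

lemma sum_split2_set:
  assumes "finite A" "p \<in> A" "l \<in> A" "p \<noteq> l"
  shows "sum f A = f p + f l + sum f (A - {p, l})"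
proof -
  have "sum f A = f p + sum f (A - {p})" using assms by (simp add: sum.remove)
  also have "sum f (A - {p}) = f l + sum f (A - {p} - {l})" using assms by (intro sum.remove) auto
  also have "A - {p} - {l} = A - {p, l}" by auto
  finally show ?thesis by (simp add: add.assoc)
qed

lemma rot_unitary:
  assumes k0: "0 < \<kappa>" "\<kappa> < d" and cs: "cc * cc + ss * ss = 1" and k1: "k1 < d" and k2: "k2 < d"
  shows "(\<Sum>k\<in>{..<d}. cnj (rot \<kappa> cc ss k k1) * rot \<kappa> cc ss k k2) = (if k1 = k2 then 1 else 0)"
proof -
  have rest: "(\<Sum>k\<in>{..<d} - {0, \<kappa>}. cnj (rot \<kappa> cc ss k k1) * rot \<kappa> cc ss k k2) =
     (if k1 = k2 \<and> k1 \<noteq> 0 \<and> k1 \<noteq> \<kappa> then 1 else 0)"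
  proof -
    have "(\<Sum>k\<in>{..<d} - {0, \<kappa>}. cnj (rot \<kappa> cc ss k k1) * rot \<kappa> cc ss k k2) =
       (\<Sum>k\<in>{..<d} - {0, \<kappa>}. if k = k1 then (if k1 = k2 \<and> k1 \<noteq> 0 \<and> k1 \<noteq> \<kappa> then 1 else 0) else 0)"
      by (rule sum.cong) (auto simp: rot_def)
    also have "\<dots> = (if k1 = k2 \<and> k1 \<noteq> 0 \<and> k1 \<noteq> \<kappa> then 1 else 0)"
      using k1 by (simp add: sum.delta)
    finally show ?thesis .
  qed
  have csc: "complex_of_real cc * complex_of_real cc + complex_of_real ss * complex_of_real ss = 1"
    using cs by (metis of_real_1 of_real_add of_real_mult)
  have "(\<Sum>k\<in>{..<d}. cnj (rot \<kappa> cc ss k k1) * rot \<kappa> cc ss k k2) =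
     cnj (rot \<kappa> cc ss 0 k1) * rot \<kappa> cc ss 0 k2 + cnj (rot \<kappa> cc ss \<kappa> k1) * rot \<kappa> cc ss \<kappa> k2 +
     (\<Sum>k\<in>{..<d} - {0, \<kappa>}. cnj (rot \<kappa> cc ss k k1) * rot \<kappa> cc ss k k2)"
    using k0 by (intro sum_split2_set) auto
  also have "\<dots> = (if k1 = k2 then 1 else 0)"
    unfolding rest using k0 csc
    by (cases "k1 = 0"; cases "k1 = \<kappa>"; cases "k2 = 0"; cases "k2 = \<kappa>") (simp_all add: rot_def algebra_simps)
  finally show ?thesis .
qed

lemma sum_prod_split: "sum f (A \<times> B) = (\<Sum>x\<in>A. \<Sum>y\<in>B. f (x, y))"
  unfolding sum.cartesian_product by simp

lemma U_unitary:
  fixes R :: "'a::finite \<Rightarrow> nat \<Rightarrow> nat \<Rightarrow> complex"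
  assumes R: "\<And>a k1 k2. k1 < d \<Longrightarrow> k2 < d \<Longrightarrow> (\<Sum>k\<in>{..<d}. cnj (R a k k1) * R a k k2) = (if k1 = k2 then 1 else 0)"
    and X: "urows X"
  shows "unitary_SA d (\<lambda>(k, a) (k', a'). R a k k' * cnj (X a' a))"
  unfolding unitary_SA_def idxSA_def
proof (intro ballI)
  fix x y assume x: "x \<in> {..<d} \<times> (UNIV::'a set)" and y: "y \<in> {..<d} \<times> (UNIV::'a set)"
  obtain k1 a1 where x': "x = (k1, a1)" "k1 < d" using x by auto
  obtain k2 a2 where y': "y = (k2, a2)" "k2 < d" using y by auto
  have "(\<Sum>z\<in>{..<d} \<times> UNIV. cnj ((\<lambda>(k, a) (k', a'). R a k k' * cnj (X a' a)) z x) * (\<lambda>(k, a) (k', a'). R a k k' * cnj (X a' a)) z y)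
     = (\<Sum>k\<in>{..<d}. \<Sum>a\<in>UNIV. (X a1 a * cnj (X a2 a)) * (cnj (R a k k1) * R a k k2))"
    unfolding x' y' sum_prod_split by (simp add: algebra_simps)
  also have "\<dots> = (\<Sum>a\<in>UNIV. \<Sum>k\<in>{..<d}. (X a1 a * cnj (X a2 a)) * (cnj (R a k k1) * R a k k2))"
    by (rule sum.swap)
  also have "\<dots> = (\<Sum>a\<in>UNIV. (X a1 a * cnj (X a2 a)) * (if k1 = k2 then 1 else 0))"
    by (simp add: sum_distrib_left[symmetric] R x'(2) y'(2) del: mult_cancel_left)
  also have "\<dots> = (if x = y then 1 else 0)"
    using X unfolding urows_def x' y' by (simp add: sum_distrib_right[symmetric])
  finally show "(\<Sum>z\<in>{..<d} \<times> UNIV. cnj ((\<lambda>(k, a) (k', a'). R a k k' * cnj (X a' a)) z x) * (\<lambda>(k, a) (k', a'). R a k k' * cnj (X a' a)) z y) = (if x = y then 1 else 0)" .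
qed

lemma apply_U:
  fixes R :: "'a::finite \<Rightarrow> nat \<Rightarrow> nat \<Rightarrow> complex" and f :: "'a \<times> 'b \<Rightarrow> complex"
  assumes d: "0 < d"
  shows "apply_SA d (\<lambda>(k, a) (k', a'). R a k k' * cnj (X a' a)) (\<lambda>(k', a', b'). (if k' = 0 then 1 else 0) * f (a', b')) (k, a, b)
     = R a k 0 * pcon (col X a) f b"
proof -
  have "apply_SA d (\<lambda>(k, a) (k', a'). R a k k' * cnj (X a' a)) (\<lambda>(k', a', b'). (if k' = 0 then 1 else 0) * f (a', b')) (k, a, b)
     = (\<Sum>k'\<in>{..<d}. \<Sum>a'\<in>UNIV. R a k k' * cnj (X a' a) * ((if k' = 0 then 1 else 0) * f (a', b)))"
    unfolding apply_SA_def idxSA_def sum_prod_split by simp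
  also have "\<dots> = (\<Sum>k'\<in>{..<d}. if k' = 0 then (\<Sum>a'\<in>UNIV. R a k 0 * cnj (X a' a) * f (a', b)) else 0)"
    by (rule sum.cong) auto
  also have "\<dots> = R a k 0 * pcon (col X a) f b"
    using d by (simp add: sum.delta pcon_def col_def sum_distrib_left algebra_simps)
  finally show ?thesis .
qed



lemma urows_id: "urows (\<lambda>(a::'a::finite) (j::'a). if a = j then (1::complex) else 0)"
proof -
  have e2: "\<And>j j'::'a. (\<Sum>a\<in>UNIV. (if j = a then (1::complex) else 0) * cnj (if j' = a then 1 else 0)) = (\<Sum>a\<in>UNIV. if a = j then (if j = j' then 1 else 0) else 0)"
    by (rule sum.cong) auto
  show ?thesis unfolding urows_def using e2 by simp
qed

lemma prod_slot_ineq: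
  fixes s t lam p q k \<mu> :: real
  assumes st: "s > 0" "t > 0" and lam: "lam = sqrt (s / t)" and pq: "p > 0" "q > 0" and k: "k > 0"
    and kl: "k \<le> lam * p" and lq: "lam * lam * p \<le> q" and mu: "\<mu> > 0"
  shows "1 \<ge> sqrt (s * (\<mu> * p) / (t * (\<mu> * q)))"
    and "sqrt (s * (\<mu> * p) / (t * (\<mu> * q))) \<ge> k / (sqrt p * sqrt q)"
    and "k / (sqrt p * sqrt q) \<ge> 0"
proof -
  have r: "s * (\<mu> * p) / (t * (\<mu> * q)) = lam * lam * p / q"
    using st mu pq unfolding lam by (simp add: field_simps)
  have "lam * lam * p / q \<le> 1" using lq pq by (simp add: field_simps)
  then show "1 \<ge> sqrt (s * (\<mu> * p) / (t * (\<mu> * q)))" unfolding r by simp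
  have sq: "(k / (sqrt p * sqrt q))\<^sup>2 = k * k / (p * q)"
    using pq by (simp add: power2_eq_square field_simps)
  have l0: "lam \<ge> 0" unfolding lam using st by simp
  have "k * k \<le> (lam * p) * (lam * p)" using k kl by (intro mult_mono) auto
  then have "k * k / (p * q) \<le> lam * lam * p / q" using pq by (simp add: field_simps)
  then show "sqrt (s * (\<mu> * p) / (t * (\<mu> * q))) \<ge> k / (sqrt p * sqrt q)"
    unfolding r by (intro real_le_rsqrt) (simp add: sq)
  show "k / (sqrt p * sqrt q) \<ge> 0" using k pq by simp
qed

lemma lemma4_card1:
  fixes \<phi> \<psi> :: "'a::finite \<times> 'b::finite \<Rightarrow> complex" and s t :: real
  assumes "ip \<phi> \<phi> = 1" and "ip \<psi> \<psi> = 1"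
    and "ip \<phi> \<psi> \<in> \<real>" and "Re (ip \<phi> \<psi>) > 0"
    and "s > 0" and "t > 0" and "s + t = 1" and "s \<le> t"
    and "sqrt (s / t) \<ge> Re (ip \<phi> \<psi>)" and card1: "card (UNIV::'a set) = 1"
  shows "\<exists>(dS::nat) (z0::nat \<Rightarrow> complex) (e::nat \<Rightarrow> nat \<Rightarrow> complex) (N::nat)
           (U::nat \<times> 'a \<Rightarrow> nat \<times> 'a \<Rightarrow> complex) (m::nat)
           (si::nat \<Rightarrow> real) (ti::nat \<Rightarrow> real)
           (\<phi>i::nat \<Rightarrow> 'a \<times> 'b \<Rightarrow> complex) (\<psi>i::nat \<Rightarrow> 'a \<times> 'b \<Rightarrow> complex)
           (\<alpha>::nat \<Rightarrow> 'a \<Rightarrow> complex) (\<eta>::nat \<Rightarrow> 'b \<Rightarrow> complex) (\<gamma>::nat \<Rightarrow> 'b \<Rightarrow> complex).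
      ipS dS z0 z0 = 1 \<and>
      (\<forall>i\<in>{1..N}. \<forall>j\<in>{1..N}. ipS dS (e i) (e j) = (if i = j then 1 else 0)) \<and>
      unitary_SA dS U \<and>
      m \<le> N \<and>
      (\<forall>i\<in>{1..N}. si i \<ge> 0 \<and> ti i \<ge> 0) \<and>
      (\<forall>i\<in>{1..m}. ip (\<phi>i i) (\<phi>i i) = 1 \<and> ip (\<psi>i i) (\<psi>i i) = 1 \<and> ip (\<phi>i i) (\<psi>i i) = 0) \<and>
      (\<forall>i\<in>{m+1..N}. ip (\<alpha> i) (\<alpha> i) = 1 \<and> ip (\<eta> i) (\<eta> i) = 1 \<and> ip (\<gamma> i) (\<gamma> i) = 1 \<and>
         ti i > 0 \<and> ip (\<eta> i) (\<gamma> i) \<in> \<real> \<and>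
         1 \<ge> sqrt (s * si i / (t * ti i)) \<and>
         sqrt (s * si i / (t * ti i)) \<ge> Re (ip (\<eta> i) (\<gamma> i)) \<and>
         Re (ip (\<eta> i) (\<gamma> i)) \<ge> 0) \<and>
      (\<forall>k<dS. \<forall>a b.
         apply_SA dS U (\<lambda>(k', a', b'). z0 k' * \<phi> (a', b')) (k, a, b) =
           (\<Sum>i\<in>{1..m}. complex_of_real (sqrt (si i)) * e i k * \<phi>i i (a, b)) +
           (\<Sum>i\<in>{m+1..N}. complex_of_real (sqrt (si i)) * e i k * \<alpha> i a * \<eta> i b)) \<and>
      (\<forall>k<dS. \<forall>a b.
         apply_SA dS U (\<lambda>(k', a', b'). z0 k' * \<psi> (a', b')) (k, a, b) =
           (\<Sum>i\<in>{1..m}. complex_of_real (sqrt (ti i)) * e i k * \<psi>i i (a, b)) +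
           (\<Sum>i\<in>{m+1..N}. complex_of_real (sqrt (ti i)) * e i k * \<alpha> i a * \<gamma> i b))"
proof -
  note A = assms
  obtain a0 :: 'a where U1: "UNIV = {a0}" using card_1_singletonE[OF card1] by blast
  define Rid where "Rid = (\<lambda>(a::'a) (k::nat) (k'::nat). if k = k' then (1::complex) else 0)"
  define Xid where "Xid = (\<lambda>(a::'a) (j::'a). if a = j then (1::complex) else 0)"
  define U where "U = (\<lambda>(k, a) (k', a'). Rid a k k' * cnj (Xid a' a))"
  have uX: "urows Xid" unfolding Xid_def by (rule urows_id)
  have uR: "\<And>a k1 k2. k1 < 1 \<Longrightarrow> k2 < 1 \<Longrightarrow> (\<Sum>k\<in>{..<1}. cnj (Rid a k k1) * Rid a k k2) = (if k1 = k2 then 1 else 0)"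
    unfolding Rid_def by simp
  have unit: "unitary_SA 1 U" unfolding U_def by (rule U_unitary[OF uR uX])
  have ipa: "\<And>f g :: 'a \<times> 'b \<Rightarrow> complex. ip f g = ip (\<lambda>b. f (a0, b)) (\<lambda>b. g (a0, b))"
    unfolding ip_pair U1 by (simp add: ip_def)
  have aa: "\<And>a. a = a0" using U1 by auto
  have s1: "sqrt (s * 1 / (t * 1)) \<le> 1" using A(5,6,8) by simp
  have eq: "\<And>f :: 'a \<times> 'b \<Rightarrow> complex. \<forall>k<1. \<forall>a b.
         apply_SA 1 U (\<lambda>(k', a', b'). (\<lambda>k. if k = 0 then 1 else 0) k' * f (a', b')) (k, a, b) =
           (\<Sum>i\<in>{1..(0::nat)}. complex_of_real (sqrt (1::real)) * (\<lambda>i k. if k = 0 then 1 else 0) i k * (\<lambda>i x. 0) i (a, b)) +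
           (\<Sum>i\<in>{0+1..(1::nat)}. complex_of_real (sqrt (1::real)) * (\<lambda>i k. if k = 0 then 1 else 0) i k * (\<lambda>i a. 1) i a * (\<lambda>i b. f (a0, b)) i b)"
  proof (intro allI impI)
    fix f :: "'a \<times> 'b \<Rightarrow> complex" and k :: nat and a :: 'a and b :: 'b
    assume "k < 1"
    then have k0: "k = 0" by simp
    have "apply_SA 1 U (\<lambda>(k', a', b'). (\<lambda>k. if k = 0 then 1 else 0) k' * f (a', b')) (k, a, b) = Rid a k 0 * pcon (col Xid a) f b"
      unfolding U_def by (simp add: apply_U)
    also have "\<dots> = f (a0, b)" unfolding k0 Rid_def pcon_def col_def Xid_def U1 using aa[of a] by simp
    finally show "apply_SA 1 U (\<lambda>(k', a', b'). (\<lambda>k. if k = 0 then 1 else 0) k' * f (a', b')) (k, a, b) =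
           (\<Sum>i\<in>{1..(0::nat)}. complex_of_real (sqrt (1::real)) * (\<lambda>i k. if k = 0 then 1 else 0) i k * (\<lambda>i x. 0) i (a, b)) +
           (\<Sum>i\<in>{0+1..(1::nat)}. complex_of_real (sqrt (1::real)) * (\<lambda>i k. if k = 0 then 1 else 0) i k * (\<lambda>i a. 1) i a * (\<lambda>i b. f (a0, b)) i b)"
      using k0 by (simp add: atLeastAtMost_singleton)
  qed
  have ipaa: "ip (\<lambda>a::'a. 1::complex) (\<lambda>a. 1) = 1" unfolding ip_def U1 by simp
  show ?thesis
    apply (rule exI[of _ 1], rule exI[of _ "\<lambda>k. if k = 0 then 1 else 0"], rule exI[of _ "\<lambda>i k. if k = 0 then 1 else 0"],
        rule exI[of _ 1], rule exI[of _ U], rule exI[of _ 0], rule exI[of _ "\<lambda>i. 1"], rule exI[of _ "\<lambda>i. 1"],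
        rule exI[of _ "\<lambda>i x. 0"], rule exI[of _ "\<lambda>i x. 0"], rule exI[of _ "\<lambda>i a. 1"],
        rule exI[of _ "\<lambda>i b. \<phi> (a0, b)"], rule exI[of _ "\<lambda>i b. \<psi> (a0, b)"])
    apply (intro conjI)
    using eq[of \<phi>] eq[of \<psi>] unit s1 A ipaa ipa[of \<phi> \<phi>] ipa[of \<psi> \<psi>] ipa[of \<phi> \<psi>]
    by (simp_all add: ipS_def)
qed

lemma lemma4_main:
  fixes \<phi> \<psi> :: "'a::finite \<times> 'b::finite \<Rightarrow> complex" and s t :: real
  assumes "ip \<phi> \<phi> = 1" and "ip \<psi> \<psi> = 1"
    and "ip \<phi> \<psi> \<in> \<real>" and "Re (ip \<phi> \<psi>) > 0"
    and "s > 0" and "t > 0" and "s + t = 1" and "s \<le> t"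
    and "sqrt (s / t) \<ge> Re (ip \<phi> \<psi>)" and two: "(i1::'a) \<noteq> i2"
  shows "\<exists>(dS::nat) (z0::nat \<Rightarrow> complex) (e::nat \<Rightarrow> nat \<Rightarrow> complex) (N::nat)
           (U::nat \<times> 'a \<Rightarrow> nat \<times> 'a \<Rightarrow> complex) (m::nat)
           (si::nat \<Rightarrow> real) (ti::nat \<Rightarrow> real)
           (\<phi>i::nat \<Rightarrow> 'a \<times> 'b \<Rightarrow> complex) (\<psi>i::nat \<Rightarrow> 'a \<times> 'b \<Rightarrow> complex)
           (\<alpha>::nat \<Rightarrow> 'a \<Rightarrow> complex) (\<eta>::nat \<Rightarrow> 'b \<Rightarrow> complex) (\<gamma>::nat \<Rightarrow> 'b \<Rightarrow> complex).
      ipS dS z0 z0 = 1 \<and>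
      (\<forall>i\<in>{1..N}. \<forall>j\<in>{1..N}. ipS dS (e i) (e j) = (if i = j then 1 else 0)) \<and>
      unitary_SA dS U \<and>
      m \<le> N \<and>
      (\<forall>i\<in>{1..N}. si i \<ge> 0 \<and> ti i \<ge> 0) \<and>
      (\<forall>i\<in>{1..m}. ip (\<phi>i i) (\<phi>i i) = 1 \<and> ip (\<psi>i i) (\<psi>i i) = 1 \<and> ip (\<phi>i i) (\<psi>i i) = 0) \<and>
      (\<forall>i\<in>{m+1..N}. ip (\<alpha> i) (\<alpha> i) = 1 \<and> ip (\<eta> i) (\<eta> i) = 1 \<and> ip (\<gamma> i) (\<gamma> i) = 1 \<and>
         ti i > 0 \<and> ip (\<eta> i) (\<gamma> i) \<in> \<real> \<and>
         1 \<ge> sqrt (s * si i / (t * ti i)) \<and>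
         sqrt (s * si i / (t * ti i)) \<ge> Re (ip (\<eta> i) (\<gamma> i)) \<and>
         Re (ip (\<eta> i) (\<gamma> i)) \<ge> 0) \<and>
      (\<forall>k<dS. \<forall>a b.
         apply_SA dS U (\<lambda>(k', a', b'). z0 k' * \<phi> (a', b')) (k, a, b) =
           (\<Sum>i\<in>{1..m}. complex_of_real (sqrt (si i)) * e i k * \<phi>i i (a, b)) +
           (\<Sum>i\<in>{m+1..N}. complex_of_real (sqrt (si i)) * e i k * \<alpha> i a * \<eta> i b)) \<and>
      (\<forall>k<dS. \<forall>a b.
         apply_SA dS U (\<lambda>(k', a', b'). z0 k' * \<psi> (a', b')) (k, a, b) =
           (\<Sum>i\<in>{1..m}. complex_of_real (sqrt (ti i)) * e i k * \<psi>i i (a, b)) +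
           (\<Sum>i\<in>{m+1..N}. complex_of_real (sqrt (ti i)) * e i k * \<alpha> i a * \<gamma> i b))"
proof -
  note A = assms
  define c where "c = Re (ip \<phi> \<psi>)"
  have ipc: "ip \<phi> \<psi> = complex_of_real c" using A(3) unfolding c_def by (auto elim: Reals_cases)
  have c0: "c > 0" using A(4) c_def by simp
  have ipc': "ip \<psi> \<phi> = complex_of_real c" using ipc ip_cnj[of \<psi> \<phi>] by simp
  define lam where "lam = sqrt (s / t)"
  have lam0: "lam > 0" unfolding lam_def using A(5,6) by simp
  have lam1: "lam \<le> 1" unfolding lam_def using A(5,6,8) by simp
  have clam: "c \<le> lam" unfolding lam_def c_def using A(9) by simp
  have c1: "c \<le> 1" using clam lam1 by simp
  define w where "w = (\<lambda>x. 1 * \<psi> x + complex_of_real (- lam) * \<phi> x)"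
  define nw where "nw = 1 - 2 * lam * c + lam * lam"
  have ipw: "ip w w = complex_of_real nw"
    unfolding w_def ip_comb A(1) A(2) ipc ipc' nw_def by (simp add: algebra_simps)
  have ipphw: "ip \<phi> w = complex_of_real (c - lam)"
    unfolding w_def ip_comb_right A(1) ipc by simp
  have nwge: "nw \<ge> (lam - c) * (lam - c)"
  proof -
    have "nw - (lam - c) * (lam - c) = 1 - c * c" unfolding nw_def by (simp add: algebra_simps)
    moreover have "c * c \<le> 1" using c0 c1 by (simp add: mult_le_one)
    ultimately show ?thesis by simp
  qed
  define aa where "aa = (if nw = 0 then 0 else (c - lam) / nw)"
  define bb where "bb = 1 + lam * aa"
  have nw0: "nw \<ge> 0" using nwge zero_le_square[of "lam - c"] by linarith
  have aa0: "aa \<le> 0" unfolding aa_def using clam nw0 by (simp add: divide_nonpos_nonneg)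
  have bl: "bb - lam * aa = 1" unfolding bb_def by simp
  have bsq: "bb * bb \<ge> lam * lam * (aa * aa)"
  proof (cases "nw = 0")
    case True then show ?thesis unfolding bb_def aa_def by simp
  next
    case False
    then have nwp: "nw > 0" using nw0 by simp
    have "bb * bb - lam * lam * (aa * aa) = (bb - lam * aa) * (bb + lam * aa)" by (simp add: algebra_simps)
    also have "\<dots> = 1 + 2 * lam * aa" unfolding bb_def by simp
    also have "\<dots> = (1 - lam * lam) / nw" unfolding aa_def nw_def using False by (simp add: field_simps nw_def)
    also have "\<dots> \<ge> 0" using lam0 lam1 nwp by (simp add: mult_le_one)
    finally show ?thesis by simp
  qed
  define \<xi> where "\<xi> = (\<lambda>x. 1 * \<phi> x + complex_of_real (- aa) * w x)"
  have xiw: "ip \<xi> w = 0"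
  proof (cases "nw = 0")
    case True
    then have "(lam - c) * (lam - c) \<le> 0" using nwge by simp
    then have "(lam - c) * (lam - c) = 0" using zero_le_square[of "lam - c"] by linarith
    then have "c = lam" by simp
    then show ?thesis unfolding \<xi>_def ip_comb_left ipphw ipw aa_def using True by simp
  next
    case False
    then show ?thesis unfolding \<xi>_def ip_comb_left ipphw ipw aa_def by (simp add: field_simps)
  qed
  have phdec: "\<phi> = (\<lambda>x. 1 * \<xi> x + complex_of_real aa * w x)" unfolding \<xi>_def by (auto simp: algebra_simps)
  have psdec: "\<psi> = (\<lambda>x. complex_of_real lam * \<xi> x + complex_of_real bb * w x)"
    unfolding \<xi>_def w_def bb_def by (auto simp: algebra_simps)
  obtain X where X: "ucols X" "urows X" "\<forall>j. qf (crossM \<xi> w) (col X j) = 0"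
    using walgate[of "crossM \<xi> w"] trace_crossM[of \<xi> w] xiw by auto
  define Av where "Av j = pcon (col X j) \<xi>" for j
  define Bv where "Bv j = pcon (col X j) w" for j
  define u where "u j = pcon (col X j) \<phi>" for j
  define v where "v j = pcon (col X j) \<psi>" for j
  have u_eq: "\<And>j. u j = (\<lambda>b. Av j b + complex_of_real aa * Bv j b)"
    unfolding u_def Av_def Bv_def by (subst phdec, subst pcon_lin) simp
  have v_eq: "\<And>j. v j = (\<lambda>b. complex_of_real lam * Av j b + complex_of_real bb * Bv j b)"
    unfolding v_def Av_def Bv_def by (subst psdec, subst pcon_lin) simp
  have AB: "\<And>j. ip (Av j) (Bv j) = 0" unfolding Av_def Bv_def ip_pcon using X(3) by simp
  define k where "k j = Re (ip (u j) (v j))" for j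
  define p where "p j = Re (ip (u j) (u j))" for j
  define q where "q j = Re (ip (v j) (v j))" for j
  note BG = branch_good[OF AB lam0 aa0 bl bsq]
  have ipuv: "\<And>j. ip (u j) (v j) = complex_of_real (k j)" unfolding k_def u_eq v_eq BG(1) by simp
  have ipuu: "\<And>j. ip (u j) (u j) = complex_of_real (p j)" by (simp add: p_def ip_self_eq[symmetric])
  have ipvv: "\<And>j. ip (v j) (v j) = complex_of_real (q j)" by (simp add: q_def ip_self_eq[symmetric])
  have kp: "\<And>j. k j \<le> lam * p j" unfolding k_def p_def u_eq v_eq by (rule BG(4))
  have pq: "\<And>j. lam * lam * p j \<le> q j" unfolding q_def p_def u_eq v_eq by (rule BG(5))
  have kpos: "\<And>j. k j > 0 \<Longrightarrow> p j > 0 \<and> q j > 0" unfolding k_def q_def p_def u_eq v_eq by (rule BG(6))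
  have p0: "\<And>j. p j \<ge> 0" and q0: "\<And>j. q j \<ge> 0" unfolding p_def q_def by (rule ip_self_nonneg)+
  have sumk: "(\<Sum>j\<in>UNIV. k j) = c"
  proof -
    have "(\<Sum>j\<in>UNIV. ip (u j) (v j)) = ip \<phi> \<psi>" unfolding u_def v_def by (rule sum_ip_pcon[OF X(2)])
    then have "complex_of_real (\<Sum>j\<in>UNIV. k j) = complex_of_real c" by (simp add: ipuv ipc of_real_sum)
    then show ?thesis by (simp only: of_real_eq_iff)
  qed
  define P where "P = {j. k j > 0}"
  define Kp where "Kp = sum k P"
  have Kpc: "Kp \<ge> c"
  proof -
    have "(\<Sum>j\<in>UNIV. k j) = sum k P + sum k (UNIV - P)" by (simp add: sum.subset_diff[of P UNIV])
    moreover have "sum k (UNIV - P) \<le> 0" by (rule sum_nonpos) (auto simp: P_def)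
    ultimately show ?thesis using sumk Kp_def by simp
  qed
  define \<mu> where "\<mu> = c / Kp"
  have mu0: "\<mu> > 0" and mu1: "\<mu> \<le> 1" unfolding \<mu>_def using c0 Kpc by auto
  have muK: "\<mu> * Kp = c" unfolding \<mu>_def using c0 Kpc by simp
  define \<mu>f where "\<mu>f j = (if j \<in> P then \<mu> else 0)" for j
  have muf1: "\<And>j. 1 - \<mu>f j \<ge> 0" unfolding \<mu>f_def using mu1 by simp
  define m\<phi> where "m\<phi> = (\<lambda>(a, b). complex_of_real (sqrt (1 - \<mu>f a)) * u a b)"
  define m\<psi> where "m\<psi> = (\<lambda>(a, b). complex_of_real (sqrt (1 - \<mu>f a)) * v a b)"
  have mo: "ip m\<phi> m\<psi> = 0"
  proof -
    have "ip m\<phi> m\<psi> = (\<Sum>a\<in>UNIV. \<Sum>b\<in>UNIV. complex_of_real (1 - \<mu>f a) * (cnj (u a b) * v a b))"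
      unfolding ip_pair m\<phi>_def m\<psi>_def
    proof (intro sum.cong refl)
      fix a b
      have "complex_of_real (sqrt (1 - \<mu>f a)) * complex_of_real (sqrt (1 - \<mu>f a)) = complex_of_real (1 - \<mu>f a)"
        using muf1[of a] by (simp flip: of_real_mult)
      moreover have "cnj (complex_of_real (sqrt (1 - \<mu>f a)) * u a b) * (complex_of_real (sqrt (1 - \<mu>f a)) * v a b) =
          (complex_of_real (sqrt (1 - \<mu>f a)) * complex_of_real (sqrt (1 - \<mu>f a))) * (cnj (u a b) * v a b)"
        by (simp only: complex_cnj_mult complex_cnj_complex_of_real mult_ac)
      ultimately show "cnj (case (a, b) of (a, b) \<Rightarrow> complex_of_real (sqrt (1 - \<mu>f a)) * u a b) *
          (case (a, b) of (a, b) \<Rightarrow> complex_of_real (sqrt (1 - \<mu>f a)) * v a b) =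
          complex_of_real (1 - \<mu>f a) * (cnj (u a b) * v a b)"
        by simp
    qed
    also have "\<dots> = (\<Sum>a\<in>UNIV. complex_of_real (1 - \<mu>f a) * ip (u a) (v a))"
      by (simp only: sum_distrib_left[symmetric] ip_def)
    also have "\<dots> = (\<Sum>a\<in>UNIV. complex_of_real ((1 - \<mu>f a) * k a))"
      by (simp only: ipuv of_real_mult)
    also have "\<dots> = complex_of_real (\<Sum>a\<in>UNIV. (1 - \<mu>f a) * k a)"
      by (simp only: of_real_sum)
    also have "(\<Sum>a\<in>UNIV. (1 - \<mu>f a) * k a) = (\<Sum>a\<in>UNIV. k a) - (\<Sum>a\<in>UNIV. \<mu>f a * k a)"
      by (simp add: algebra_simps sum_subtractf)
    also have "(\<Sum>a\<in>UNIV. \<mu>f a * k a) = \<mu> * Kp"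
    proof -
      have "(\<Sum>a\<in>UNIV. \<mu>f a * k a) = (\<Sum>a\<in>UNIV. if a \<in> P then \<mu> * k a else 0)"
        unfolding \<mu>f_def by (rule sum.cong) auto
      also have "\<dots> = (\<Sum>a\<in>P. \<mu> * k a)" by (simp add: sum.If_cases Int_def)
      finally show ?thesis unfolding Kp_def by (simp add: sum_distrib_left)
    qed
    finally show ?thesis using sumk muK by simp
  qed
  obtain \<phi>1 \<psi>1 where N1: "ip \<phi>1 \<phi>1 = 1" "ip \<psi>1 \<psi>1 = 1" "ip \<phi>1 \<psi>1 = 0"
      "m\<phi> = (\<lambda>i. complex_of_real (sqrt (Re (ip m\<phi> m\<phi>))) * \<phi>1 i)"
      "m\<psi> = (\<lambda>i. complex_of_real (sqrt (Re (ip m\<psi> m\<psi>))) * \<psi>1 i)"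
    using norm_pair[of "(i1, undefined)" "(i2, undefined)" m\<phi> m\<psi>] two mo by auto
  define n where "n = card P"
  have finP: "finite P" by simp
  obtain h where h: "bij_betw h {0..<n} P" using ex_bij_betw_nat_finite[OF finP] n_def by auto
  define \<iota> where "\<iota> j = inv_into {0..<n} h j + 1" for j
  have hP: "\<And>i. i < n \<Longrightarrow> h i \<in> P" using h by (auto dest: bij_betw_apply)
  have iP: "\<And>j. j \<in> P \<Longrightarrow> 1 \<le> \<iota> j \<and> \<iota> j \<le> n \<and> h (\<iota> j - 1) = j"
  proof -
    fix j assume j: "j \<in> P"
    have "inv_into {0..<n} h j \<in> {0..<n}" using bij_betw_apply[OF bij_betw_inv_into[OF h] j] .
    moreover have "h (inv_into {0..<n} h j) = j" by (rule bij_betw_inv_into_right[OF h j])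
    ultimately show "1 \<le> \<iota> j \<and> \<iota> j \<le> n \<and> h (\<iota> j - 1) = j" unfolding \<iota>_def by auto
  qed
  have hi: "\<And>i. i < n \<Longrightarrow> \<iota> (h i) = i + 1" unfolding \<iota>_def using bij_betw_inv_into_left[OF h] by simp
  have equiv: "\<And>a kk. 1 \<le> kk \<Longrightarrow> kk \<le> n \<Longrightarrow> (a \<in> P \<and> \<iota> a = kk) \<longleftrightarrow> a = h (kk - 1)"
  proof -
    fix a kk assume k1: "1 \<le> kk" and k2: "kk \<le> n"
    show "(a \<in> P \<and> \<iota> a = kk) \<longleftrightarrow> a = h (kk - 1)"
    proof
      assume "a \<in> P \<and> \<iota> a = kk" then show "a = h (kk - 1)" using iP[of a] by auto
    next
      assume a: "a = h (kk - 1)"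
      have "kk - 1 < n" using k1 k2 by simp
      then show "a \<in> P \<and> \<iota> a = kk" using a hP hi k1 by auto
    qed
  qed
  define R where "R a = (if a \<in> P then rot (\<iota> a) (sqrt (1 - \<mu>)) (sqrt \<mu>) else (\<lambda>k k'. if k = k' then (1::complex) else 0))" for a
  define U where "U = (\<lambda>(k, a) (k', a'). R a k k' * cnj (X a' a))"
  have Runi: "\<And>a k1 k2. k1 < n + 1 \<Longrightarrow> k2 < n + 1 \<Longrightarrow> (\<Sum>k\<in>{..<n + 1}. cnj (R a k k1) * R a k k2) = (if k1 = k2 then 1 else 0)"
  proof -
    fix a k1 k2 assume k1: "k1 < n + 1" and k2: "k2 < n + 1"
    show "(\<Sum>k\<in>{..<n + 1}. cnj (R a k k1) * R a k k2) = (if k1 = k2 then 1 else 0)"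
    proof (cases "a \<in> P")
      case True
      have cs: "sqrt (1 - \<mu>) * sqrt (1 - \<mu>) + sqrt \<mu> * sqrt \<mu> = 1" using mu0 mu1 by simp
      show ?thesis unfolding R_def using True rot_unitary[OF _ _ cs k1 k2, of "\<iota> a"] iP[OF True] by simp
    next
      case False
      have "(\<Sum>k\<in>{..<n + 1}. cnj (R a k k1) * R a k k2) = (\<Sum>k\<in>{..<n + 1}. if k = k1 then (if k1 = k2 then 1 else 0) else 0)"
        unfolding R_def using False by (intro sum.cong) auto
      then show ?thesis using k1 by simp
    qed
  qed
  have unit: "unitary_SA (n + 1) U" unfolding U_def by (rule U_unitary[OF Runi X(2)])
  have R00: "\<And>a. R a 0 0 = complex_of_real (sqrt (1 - \<mu>f a))"
    unfolding R_def \<mu>f_def rot_def by simp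
  have Rk0: "\<And>a kk. 1 \<le> kk \<Longrightarrow> kk \<le> n \<Longrightarrow> R a kk 0 = (if a = h (kk - 1) then complex_of_real (sqrt \<mu>) else 0)"
  proof -
    fix a kk assume k1: "1 \<le> kk" and k2: "kk \<le> n"
    show "R a kk 0 = (if a = h (kk - 1) then complex_of_real (sqrt \<mu>) else 0)"
      using equiv[OF k1 k2, of a] k1 unfolding R_def rot_def by auto
  qed
  have slot_eq: "\<And>(f :: 'a \<times> 'b \<Rightarrow> complex) (uu :: 'a \<Rightarrow> 'b \<Rightarrow> complex) (pp :: 'a \<Rightarrow> real) (mm :: 'a \<times> 'b \<Rightarrow> complex) (xx :: 'a \<times> 'b \<Rightarrow> complex). (\<And>a. uu a = pcon (col X a) f) \<Longrightarrow> (\<And>j. j \<in> P \<Longrightarrow> pp j > 0) \<Longrightarrow>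
      mm = (\<lambda>(a, b). complex_of_real (sqrt (1 - \<mu>f a)) * uu a b) \<Longrightarrow>
      mm = (\<lambda>i. complex_of_real (sqrt (Re (ip mm mm))) * xx i) \<Longrightarrow>
      \<forall>kk<n + 1. \<forall>a b. apply_SA (n + 1) U (\<lambda>(k', a', b'). (if k' = 0 then 1 else 0) * f (a', b')) (kk, a, b) =
        (\<Sum>i\<in>{1..1}. complex_of_real (sqrt (if i = 1 then Re (ip mm mm) else \<mu> * pp (h (i - 2)))) * (if kk = i - 1 then 1 else 0) * xx (a, b)) +
        (\<Sum>i\<in>{1 + 1..n + 1}. complex_of_real (sqrt (if i = 1 then Re (ip mm mm) else \<mu> * pp (h (i - 2)))) * (if kk = i - 1 then 1 else 0) *
            (if a = h (i - 2) then 1 else 0) * (uu (h (i - 2)) b / complex_of_real (sqrt (pp (h (i - 2))))))"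
  proof (intro allI impI)
    fix f :: "'a \<times> 'b \<Rightarrow> complex" and uu :: "'a \<Rightarrow> 'b \<Rightarrow> complex" and pp :: "'a \<Rightarrow> real"
      and mm xx :: "'a \<times> 'b \<Rightarrow> complex" and kk :: nat and a :: 'a and b :: 'b
    assume uu: "\<And>a. uu a = pcon (col X a) f" and pp: "\<And>j. j \<in> P \<Longrightarrow> pp j > 0"
      and mm: "mm = (\<lambda>(a, b). complex_of_real (sqrt (1 - \<mu>f a)) * uu a b)"
      and m1x: "mm = (\<lambda>i. complex_of_real (sqrt (Re (ip mm mm))) * xx i)" and kk: "kk < n + 1"
    have L: "apply_SA (n + 1) U (\<lambda>(k', a', b'). (if k' = 0 then 1 else 0) * f (a', b')) (kk, a, b) = R a kk 0 * uu a b"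
      unfolding U_def uu by (rule apply_U) simp
    show "apply_SA (n + 1) U (\<lambda>(k', a', b'). (if k' = 0 then 1 else 0) * f (a', b')) (kk, a, b) =
        (\<Sum>i\<in>{1..1}. complex_of_real (sqrt (if i = 1 then Re (ip mm mm) else \<mu> * pp (h (i - 2)))) * (if kk = i - 1 then 1 else 0) * xx (a, b)) +
        (\<Sum>i\<in>{1 + 1..n + 1}. complex_of_real (sqrt (if i = 1 then Re (ip mm mm) else \<mu> * pp (h (i - 2)))) * (if kk = i - 1 then 1 else 0) *
            (if a = h (i - 2) then 1 else 0) * (uu (h (i - 2)) b / complex_of_real (sqrt (pp (h (i - 2))))))"
    proof (cases "kk = 0")
      case True
      have s2: "(\<Sum>i\<in>{1 + 1..n + 1}. complex_of_real (sqrt (if i = 1 then Re (ip mm mm) else \<mu> * pp (h (i - 2)))) * (if kk = i - 1 then 1 else 0) *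
            (if a = h (i - 2) then 1 else 0) * (uu (h (i - 2)) b / complex_of_real (sqrt (pp (h (i - 2)))))) = 0"
        using True by (intro sum.neutral) auto
      have "complex_of_real (sqrt (Re (ip mm mm))) * xx (a, b) = mm (a, b)" by (subst (2) m1x) simp
      also have "\<dots> = complex_of_real (sqrt (1 - \<mu>f a)) * uu a b" unfolding mm by simp
      finally show ?thesis unfolding L s2 using True R00 by simp
    next
      case False
      then have k1: "1 \<le> kk" and k2: "kk \<le> n" using kk by auto
      define j where "j = h (kk - 1)"
      have jP: "j \<in> P" unfolding j_def using hP k1 k2 by simp
      have s1: "(\<Sum>i\<in>{1..1}. complex_of_real (sqrt (if i = 1 then Re (ip mm mm) else \<mu> * pp (h (i - 2)))) * (if kk = i - 1 then 1 else 0) * xx (a, b)) = 0"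
        using False by simp
      have "(\<Sum>i\<in>{1 + 1..n + 1}. complex_of_real (sqrt (if i = 1 then Re (ip mm mm) else \<mu> * pp (h (i - 2)))) * (if kk = i - 1 then 1 else 0) *
            (if a = h (i - 2) then 1 else 0) * (uu (h (i - 2)) b / complex_of_real (sqrt (pp (h (i - 2))))))
        = (\<Sum>i\<in>{1 + 1..n + 1}. if i = kk + 1 then complex_of_real (sqrt (\<mu> * pp j)) *
            (if a = j then 1 else 0) * (uu j b / complex_of_real (sqrt (pp j))) else 0)"
        unfolding j_def by (intro sum.cong refl) auto
      also have "\<dots> = complex_of_real (sqrt (\<mu> * pp j)) * (if a = j then 1 else 0) * (uu j b / complex_of_real (sqrt (pp j)))"
        using k1 k2 by (simp add: sum.delta)
      also have "\<dots> = (if a = j then complex_of_real (sqrt \<mu>) else 0) * uu a b"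
        using pp[OF jP] by (simp add: real_sqrt_mult)
      finally show ?thesis unfolding L s1 Rk0[OF k1 k2] j_def by simp
    qed
  qed
  have prodc: "
      ip (\<lambda>a. if a = j then 1 else 0) (\<lambda>a. if a = j then 1 else 0) = 1 \<and>
      ip (\<lambda>b. u j b / complex_of_real (sqrt (p j))) (\<lambda>b. u j b / complex_of_real (sqrt (p j))) = 1 \<and>
      ip (\<lambda>b. v j b / complex_of_real (sqrt (q j))) (\<lambda>b. v j b / complex_of_real (sqrt (q j))) = 1 \<and>
      \<mu> * q j > 0 \<and>
      ip (\<lambda>b. u j b / complex_of_real (sqrt (p j))) (\<lambda>b. v j b / complex_of_real (sqrt (q j))) \<in> \<real> \<and>
      1 \<ge> sqrt (s * (\<mu> * p j) / (t * (\<mu> * q j))) \<and>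
      sqrt (s * (\<mu> * p j) / (t * (\<mu> * q j))) \<ge> Re (ip (\<lambda>b. u j b / complex_of_real (sqrt (p j))) (\<lambda>b. v j b / complex_of_real (sqrt (q j)))) \<and>
      Re (ip (\<lambda>b. u j b / complex_of_real (sqrt (p j))) (\<lambda>b. v j b / complex_of_real (sqrt (q j)))) \<ge> 0"
    if jP: "j \<in> P" for j
  proof -
    have kj: "k j > 0" using jP P_def by simp
    then have pj: "p j > 0" and qj: "q j > 0" using kpos by auto
    have pj': "Re (ip (u j) (u j)) > 0" using pj p_def by simp
    have qj': "Re (ip (v j) (v j)) > 0" using qj q_def by simp
    have a1: "ip (\<lambda>a. if a = j then 1 else 0) (\<lambda>a. if a = j then 1 else 0) = (1::complex)"
    proof -
      have "ip (\<lambda>a. if a = j then 1 else 0) (\<lambda>a. if a = j then 1 else 0) = (\<Sum>a\<in>UNIV. if a = j then (1::complex) else 0)"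
        unfolding ip_def by (rule sum.cong) auto
      then show ?thesis by simp
    qed
    have e1: "ip (\<lambda>b. u j b / complex_of_real (sqrt (p j))) (\<lambda>b. u j b / complex_of_real (sqrt (p j))) = 1"
      using normalize_vec(1)[OF pj'] unfolding p_def .
    have g1: "ip (\<lambda>b. v j b / complex_of_real (sqrt (q j))) (\<lambda>b. v j b / complex_of_real (sqrt (q j))) = 1"
      using normalize_vec(1)[OF qj'] unfolding q_def .
    have eg: "ip (\<lambda>b. u j b / complex_of_real (sqrt (p j))) (\<lambda>b. v j b / complex_of_real (sqrt (q j))) =
        complex_of_real (k j / (sqrt (p j) * sqrt (q j)))"
      using normalize_vec(3)[OF pj', of "\<lambda>b. v j b / complex_of_real (sqrt (q j))"]
        normalize_vec(4)[OF qj', of "u j"] ipuv[of j] unfolding p_def[symmetric] q_def[symmetric]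
      by simp
    note I = prod_slot_ineq[OF A(5) A(6) lam_def pj qj kj kp pq mu0]
    show ?thesis using a1 e1 g1 eg I mu0 qj by simp
  qed
  have pP: "\<And>j. j \<in> P \<Longrightarrow> p j > 0" using kpos P_def by auto
  have qP: "\<And>j. j \<in> P \<Longrightarrow> q j > 0" using kpos P_def by auto
  show ?thesis
    apply (rule exI[of _ "n + 1"], rule exI[of _ "\<lambda>kk. if kk = 0 then 1 else 0"], rule exI[of _ "\<lambda>i kk. if kk = i - 1 then 1 else 0"],
        rule exI[of _ "n + 1"], rule exI[of _ U], rule exI[of _ 1],
        rule exI[of _ "\<lambda>i. if i = 1 then Re (ip m\<phi> m\<phi>) else \<mu> * p (h (i - 2))"],
        rule exI[of _ "\<lambda>i. if i = 1 then Re (ip m\<psi> m\<psi>) else \<mu> * q (h (i - 2))"],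
        rule exI[of _ "\<lambda>i. \<phi>1"], rule exI[of _ "\<lambda>i. \<psi>1"],
        rule exI[of _ "\<lambda>i a. if a = h (i - 2) then 1 else 0"],
        rule exI[of _ "\<lambda>i b. u (h (i - 2)) b / complex_of_real (sqrt (p (h (i - 2))))"],
        rule exI[of _ "\<lambda>i b. v (h (i - 2)) b / complex_of_real (sqrt (q (h (i - 2))))"])
    apply (intro conjI)
    subgoal
    proof -
      have "(\<Sum>kk\<in>{..<n + 1}. cnj (if kk = 0 then 1 else 0) * (if kk = 0 then 1 else 0)) = (\<Sum>kk\<in>{..<n + 1}. if kk = 0 then (1::complex) else 0)"
        by (rule sum.cong) auto
      also have "\<dots> = 1" by (subst sum.delta) auto
      finally show ?thesis unfolding ipS_def .
    qed
    subgoal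
    proof (intro ballI)
      fix i j assume i: "i \<in> {1..n + 1}" and j: "j \<in> {1..n + 1}"
      have "(\<Sum>kk\<in>{..<n + 1}. cnj (if kk = i - 1 then 1 else 0) * (if kk = j - 1 then 1 else 0)) =
          (\<Sum>kk\<in>{..<n + 1}. if kk = i - 1 then (if i = j then (1::complex) else 0) else 0)"
        using i j by (intro sum.cong) auto
      also have "\<dots> = (if i = j then 1 else 0)"
        using i by (subst sum.delta) auto
      finally show "ipS (n + 1) (\<lambda>kk. if kk = i - 1 then 1 else 0) (\<lambda>kk. if kk = j - 1 then 1 else 0) = (if i = j then 1 else 0)"
        unfolding ipS_def .
    qed
    subgoal by (rule unit)
    subgoal by simp
    subgoal using mu0 p0 q0 by (auto simp: ip_self_nonneg)
    subgoal using N1 by simp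
    subgoal
      apply (intro ballI)
      subgoal premises pr for i
      proof -
        have "i - 2 < n" and "i \<noteq> 1" using pr by auto
        then show ?thesis using prodc[OF hP[of "i - 2"]] by simp
      qed
      done
    subgoal using slot_eq[where f=\<phi> and uu=u and pp=p and mm=m\<phi> and xx=\<phi>1, OF u_def pP m\<phi>_def N1(4)] .
    subgoal using slot_eq[where f=\<psi> and uu=v and pp=q and mm=m\<psi> and xx=\<psi>1, OF v_def qP m\<psi>_def N1(5)] .
    done
qed


theorem lemma4:
  fixes \<phi> \<psi> :: "'a::finite \<times> 'b::finite \<Rightarrow> complex" and s t :: real
  assumes "ip \<phi> \<phi> = 1" and "ip \<psi> \<psi> = 1"
    and "ip \<phi> \<psi> \<in> \<real>" and "Re (ip \<phi> \<psi>) > 0"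
    and "s > 0" and "t > 0" and "s + t = 1" and "s \<le> t"
    and "sqrt (s / t) \<ge> Re (ip \<phi> \<psi>)"
  shows "\<exists>(dS::nat) (z0::nat \<Rightarrow> complex) (e::nat \<Rightarrow> nat \<Rightarrow> complex) (N::nat)
           (U::nat \<times> 'a \<Rightarrow> nat \<times> 'a \<Rightarrow> complex) (m::nat)
           (si::nat \<Rightarrow> real) (ti::nat \<Rightarrow> real)
           (\<phi>i::nat \<Rightarrow> 'a \<times> 'b \<Rightarrow> complex) (\<psi>i::nat \<Rightarrow> 'a \<times> 'b \<Rightarrow> complex)
           (\<alpha>::nat \<Rightarrow> 'a \<Rightarrow> complex) (\<eta>::nat \<Rightarrow> 'b \<Rightarrow> complex) (\<gamma>::nat \<Rightarrow> 'b \<Rightarrow> complex).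
      ipS dS z0 z0 = 1 \<and>
      (\<forall>i\<in>{1..N}. \<forall>j\<in>{1..N}. ipS dS (e i) (e j) = (if i = j then 1 else 0)) \<and>
      unitary_SA dS U \<and>
      m \<le> N \<and>
      (\<forall>i\<in>{1..N}. si i \<ge> 0 \<and> ti i \<ge> 0) \<and>
      (\<forall>i\<in>{1..m}. ip (\<phi>i i) (\<phi>i i) = 1 \<and> ip (\<psi>i i) (\<psi>i i) = 1 \<and> ip (\<phi>i i) (\<psi>i i) = 0) \<and>
      (\<forall>i\<in>{m+1..N}. ip (\<alpha> i) (\<alpha> i) = 1 \<and> ip (\<eta> i) (\<eta> i) = 1 \<and> ip (\<gamma> i) (\<gamma> i) = 1 \<and>
         ti i > 0 \<and> ip (\<eta> i) (\<gamma> i) \<in> \<real> \<and>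
         1 \<ge> sqrt (s * si i / (t * ti i)) \<and>
         sqrt (s * si i / (t * ti i)) \<ge> Re (ip (\<eta> i) (\<gamma> i)) \<and>
         Re (ip (\<eta> i) (\<gamma> i)) \<ge> 0) \<and>
      (\<forall>k<dS. \<forall>a b.
         apply_SA dS U (\<lambda>(k', a', b'). z0 k' * \<phi> (a', b')) (k, a, b) =
           (\<Sum>i\<in>{1..m}. complex_of_real (sqrt (si i)) * e i k * \<phi>i i (a, b)) +
           (\<Sum>i\<in>{m+1..N}. complex_of_real (sqrt (si i)) * e i k * \<alpha> i a * \<eta> i b)) \<and>
      (\<forall>k<dS. \<forall>a b.
         apply_SA dS U (\<lambda>(k', a', b'). z0 k' * \<psi> (a', b')) (k, a, b) =
           (\<Sum>i\<in>{1..m}. complex_of_real (sqrt (ti i)) * e i k * \<psi>i i (a, b)) +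
           (\<Sum>i\<in>{m+1..N}. complex_of_real (sqrt (ti i)) * e i k * \<alpha> i a * \<gamma> i b))"
proof (cases "\<exists>i1 i2::'a. i1 \<noteq> i2")
  case True
  then obtain i1 i2 :: 'a where d: "i1 \<noteq> i2" by blast
  show ?thesis by (rule lemma4_main[OF assms d])
next
  case False
  then have "(UNIV::'a set) = {undefined}" by auto
  then have c1: "card (UNIV::'a set) = 1" by (metis card.empty card_insert_disjoint empty_iff finite.emptyI One_nat_def)
  show ?thesis by (rule lemma4_card1[OF assms c1])
qed

end
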